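(* Suppose $c,\rho>0$ satisfy the parameter condition (C), the graph $G$ is connected, and $\mathcal A\neq\emptyset$. Then the sequences $\{\mathbf z^t\}_{t\ge1}$, $\{\mathbf w^t\}_{t\ge1}$, $\{\boldsymbol\lambda^t\}_{t\ge1}$ and $\{\tilde{\mathbf z}^t\}_{t\ge1}$ generated by Algorithm SP-ADMM-JCNL are bounded.
   Context: $G=(\mathcal N,\mathcal E)$ is an undirected graph on $\mathcal N=\{1,\dots,N\}$, $\mathcal N_i=\{j:(i,j)\in\mathcal E\}$, $N_i=|\mathcal N_i|\ge1$ (neighbors listed in a fixed order). $\mathcal A\subseteq\mathcal N$ is the set of anchors with known positions $\mathbf a_k\in\mathbb R^n$. Measurements $d_{i,j}=d_{j,i}\ge0$ ($j\in\mathcal N_i$) and $r_i\ge0$. $\mathcal B^{k}$ is the product of $k$ closed Euclidean unit balls of $\mathbb R^n$; $\delta_C$ is the indicator function of $C$. Variables: $\mathbf z_i=(\mathbf x_i,\mathbf p_i^-,\mathbf p_i^+,\mathbf y_i,\mathbf q_i^-,\mathbf q_i^+)\in\mathbb R^{(4N_i+2)n}$ with $\mathbf p_i^\pm=(\mathbf p^\pm_{i,j})_{j\in\mathcal N_i}$, $\mathbf q_i^\pm=(\mathbf q^\pm_{i,j})_{j\in\mathcal N_i}$ (blocks in $\mathbb R^n$), $\mathbf z=(\mathbf z_i)_i$; $\mathbf w_i=((\mathbf v_{i,j})_{j\in\mathcal N_i},\mathbf u_i)\in\mathbb R^{(N_i+1)n}$, $\mathbf w=(\mathbf w_i)_i$;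 $\boldsymbol\lambda_i\in\mathbb R^{3N_in}$. Linear maps (identified with their matrices): $\mathbf H_i\mathbf z_i=((\mathbf x_i-\mathbf p^+_{i,j})_{j},\mathbf x_i-\mathbf y_i)$, $\mathbf A_i\mathbf z_i=((\mathbf x_i-\mathbf p^-_{i,j})_j,(\mathbf y_i-\mathbf q^-_{i,j})_j,(\mathbf y_i-\mathbf q^+_{i,j})_j)$, $\mathbf D_i=\mathrm{Diag}((d_{i,j})_{j\in\mathcal N_i},r_i)\otimes\mathbf I_n$. $G_i(\mathbf z_i,\mathbf w_i)=\frac12\|\mathbf H_i\mathbf z_i\|^2-\mathbf w_i^T\mathbf D_i\mathbf H_i\mathbf z_i$. $\mathcal X=\{\mathbf z:\mathbf x_i=\mathbf a_i\ \forall i\in\mathcal A\}$, $\mathcal Y=\{\mathbf z:\mathbf p^+_{i,j}=\mathbf p^-_{j,i},\ \mathbf q^+_{i,j}=\mathbf q^-_{j,i}\ \forall i,\ j\in\mathcal N_i\}$. $|\mathbf M|$ is the entrywise absolute value, $\|\mathbf v\|^2_{\mathbf M}=\mathbf v^T\mathbf M\mathbf v$, $\mathbf S_i=|\mathbf A_i^T\mathbf A_i|+\frac1c|\mathbf H_i^T\mathbf H_i|$, $\mathbf U_i=\mathbf H_i^T\mathbf H_i+c\mathbf A_i^T\mathbf A_i+c\mathbf S_i$ (a positive definite diagonal matrix). Augmented Lagrangian: $\mathcal L_i(\mathbf z_i,\mathbf w_i,\boldsymbol\lambda_i)=G_i(\mathbf z_i,\mathbf w_i)+\delta_{\mathcal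 B^{N_i+1}}(\mathbf w_i)+\langle\boldsymbol\lambda_i,\mathbf A_i\mathbf z_i\rangle+\frac c2\|\mathbf A_i\mathbf z_i\|^2$. Algorithm SP-ADMM-JCNL (parameters $c,\rho>0$; arbitrary $\mathbf z^0,\mathbf w^0$, $\boldsymbol\lambda^0=\mathbf 0$): for $t\ge0$, $\mathbf z^{t+1}=\arg\min_{\mathbf z\in\mathcal X\cap\mathcal Y}\sum_i[\mathcal L_i(\mathbf z_i,\mathbf w_i^t,\boldsymbol\lambda_i^t)+\frac c2\|\mathbf z_i-\mathbf z_i^t\|^2_{\mathbf S_i}]$; $\mathbf w_i^{t+1}=\mathrm{proj}_{\mathcal B^{N_i+1}}(\mathbf w_i^t+\rho^{-1}\mathbf D_i\mathbf H_i\mathbf z_i^{t+1})$; $\boldsymbol\lambda_i^{t+1}=\boldsymbol\lambda_i^t+c\mathbf A_i\mathbf z_i^{t+1}$. Auxiliary sequence: $\tilde{\mathbf z}_i^{t+1}=\mathbf U_i^{-1}(\mathbf H_i^T\mathbf D_i\mathbf w_i^t-\mathbf A_i^T\boldsymbol\lambda_i^t+c\mathbf S_i\mathbf z_i^t)$ for $t\ge0$, $\tilde{\mathbf z}^t=(\tilde{\mathbf z}_i^t)_i$. Constants: $N_{\max}=\max_iN_i$, $N_{\mathrm{sum}}=\sum_iN_i$, $d_{\max}=\max(\{d_{i,j}\}\cup\{r_i\})$, $\tilde\tau_{\min}=\min_{i\in\mathcal N}\{5(c+1)^2N_i^2+(3c^2+4c+3)N_i\}$. Parameter condition (C): there exist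 $\kappa_1,\kappa_2>0$ with $\kappa_1\ge6(2N_{\max}+2)(1+\frac1c)$, $\kappa_2\ge\frac{3N_{\mathrm{sum}}n(c+1)^2(2N_{\max}+1)\kappa_1}{\tilde\tau_{\min}}$, and $\rho\ge4d_{\max}^2(\kappa_1+\kappa_2)$. *)

theory Defs
  imports "HOL-Analysis.Analysis"
begin

text \<open>Nodes are 1..N; E is the (symmetric, irreflexive) edge relation.
  Positions/blocks live in real^'n, so n = CARD('n).
  Local variables are indexed by "slots":
  z_i = (x_i, p^-_i, p^+_i, y_i, q^-_i, q^+_i), with p/q blocks indexed by neighbours j.\<close>

datatype slot = SX | SPm nat | SPp nat | SY | SQm nat | SQp nat
datatype hrow = HV nat | HU          \<comment> \<open>rows of H_i, also indices of w_i = ((v_ij)_j, u_i)\<close>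
datatype arow = AP nat | AQm nat | AQp nat   \<comment> \<open>rows of A_i, also indices of lambda_i\<close>

definition nodes :: "nat \<Rightarrow> nat set" where "nodes N = {1..N}"

definition nbrs :: "(nat \<Rightarrow> nat \<Rightarrow> bool) \<Rightarrow> nat \<Rightarrow> nat \<Rightarrow> nat set" where
  "nbrs E N i = {j \<in> nodes N. E i j}"

definition deg :: "(nat \<Rightarrow> nat \<Rightarrow> bool) \<Rightarrow> nat \<Rightarrow> nat \<Rightarrow> nat" where
  "deg E N i = card (nbrs E N i)"

definition slots :: "(nat \<Rightarrow> nat \<Rightarrow> bool) \<Rightarrow> nat \<Rightarrow> nat \<Rightarrow> slot set" where
  "slots E N i = {SX, SY} \<union> SPm ` nbrs E N i \<union> SPp ` nbrs E N i
                 \<union> SQm ` nbrs E N i \<union> SQp ` nbrs E N i"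

definition hrows :: "(nat \<Rightarrow> nat \<Rightarrow> bool) \<Rightarrow> nat \<Rightarrow> nat \<Rightarrow> hrow set" where
  "hrows E N i = HV ` nbrs E N i \<union> {HU}"

definition arows :: "(nat \<Rightarrow> nat \<Rightarrow> bool) \<Rightarrow> nat \<Rightarrow> nat \<Rightarrow> arow set" where
  "arows E N i = AP ` nbrs E N i \<union> AQm ` nbrs E N i \<union> AQp ` nbrs E N i"

text \<open>Scalar coefficient matrices of H_i and A_i (the actual maps are these Kronecker I_n).\<close>
fun Hmat :: "hrow \<Rightarrow> slot \<Rightarrow> real" where
  "Hmat (HV j) s = (if s = SX then 1 else if s = SPp j then -1 else 0)"
| "Hmat HU s = (if s = SX then 1 else if s = SY then -1 else 0)"

fun Amat :: "arow \<Rightarrow> slot \<Rightarrow> real" where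
  "Amat (AP j) s = (if s = SX then 1 else if s = SPm j then -1 else 0)"
| "Amat (AQm j) s = (if s = SY then 1 else if s = SQm j then -1 else 0)"
| "Amat (AQp j) s = (if s = SY then 1 else if s = SQp j then -1 else 0)"

definition mv :: "('r \<Rightarrow> 's \<Rightarrow> real) \<Rightarrow> 's set \<Rightarrow> ('s \<Rightarrow> real^'n) \<Rightarrow> 'r \<Rightarrow> real^'n" where
  "mv M C v = (\<lambda>r. \<Sum>s\<in>C. M r s *\<^sub>R v s)"

definition mtv :: "('r \<Rightarrow> 's \<Rightarrow> real) \<Rightarrow> 'r set \<Rightarrow> ('r \<Rightarrow> real^'n) \<Rightarrow> 's \<Rightarrow> real^'n" where
  "mtv M R v = (\<lambda>s. \<Sum>r\<in>R. M r s *\<^sub>R v r)"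

definition gram :: "('r \<Rightarrow> 's \<Rightarrow> real) \<Rightarrow> 'r set \<Rightarrow> 's \<Rightarrow> 's \<Rightarrow> real" where
  "gram M R = (\<lambda>s s'. \<Sum>r\<in>R. M r s * M r s')"

definition absm :: "('s \<Rightarrow> 's \<Rightarrow> real) \<Rightarrow> 's \<Rightarrow> 's \<Rightarrow> real" where
  "absm K = (\<lambda>s s'. \<bar>K s s'\<bar>)"

definition qf :: "('s \<Rightarrow> 's \<Rightarrow> real) \<Rightarrow> 's set \<Rightarrow> ('s \<Rightarrow> real^'n) \<Rightarrow> real" where
  "qf K C v = (\<Sum>s\<in>C. \<Sum>s'\<in>C. K s s' * (v s \<bullet> v s'))"

definition mapply :: "('s \<Rightarrow> 's \<Rightarrow> real) \<Rightarrow> 's set \<Rightarrow> ('s \<Rightarrow> real^'n) \<Rightarrow> 's \<Rightarrow> real^'n" where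
  "mapply K C v = (\<lambda>s. \<Sum>s'\<in>C. K s s' *\<^sub>R v s')"

definition Smat :: "real \<Rightarrow> (nat \<Rightarrow> nat \<Rightarrow> bool) \<Rightarrow> nat \<Rightarrow> nat \<Rightarrow> slot \<Rightarrow> slot \<Rightarrow> real" where
  "Smat c E N i = (\<lambda>s s'. absm (gram Amat (arows E N i)) s s'
                          + (1 / c) * absm (gram Hmat (hrows E N i)) s s')"

definition Umat :: "real \<Rightarrow> (nat \<Rightarrow> nat \<Rightarrow> bool) \<Rightarrow> nat \<Rightarrow> nat \<Rightarrow> slot \<Rightarrow> slot \<Rightarrow> real" where
  "Umat c E N i = (\<lambda>s s'. gram Hmat (hrows E N i) s s' + c * gram Amat (arows E N i) s s'
                          + c * Smat c E N i s s')"

text \<open>D_i = Diag((d_ij)_j, r_i) \<otimes> I_n, as a diagonal weight on rows of H_i.\<close>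
fun Dw :: "(nat \<Rightarrow> nat \<Rightarrow> real) \<Rightarrow> (nat \<Rightarrow> real) \<Rightarrow> nat \<Rightarrow> hrow \<Rightarrow> real" where
  "Dw d r i (HV j) = d i j"
| "Dw d r i HU = r i"

definition Gi :: "(nat \<Rightarrow> nat \<Rightarrow> bool) \<Rightarrow> nat \<Rightarrow> (nat \<Rightarrow> nat \<Rightarrow> real) \<Rightarrow> (nat \<Rightarrow> real) \<Rightarrow> nat
     \<Rightarrow> (slot \<Rightarrow> real^'n) \<Rightarrow> (hrow \<Rightarrow> real^'n) \<Rightarrow> real" where
  "Gi E N d r i zi wi =
     (1/2) * (\<Sum>h\<in>hrows E N i. (norm (mv Hmat (slots E N i) zi h))\<^sup>2)
     - (\<Sum>h\<in>hrows E N i. Dw d r i h * (wi h \<bullet> mv Hmat (slots E N i) zi h))"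

text \<open>Objective of the z-update (the constant term delta_B(w_i^t) is omitted).\<close>
definition zobj :: "real \<Rightarrow> (nat \<Rightarrow> nat \<Rightarrow> bool) \<Rightarrow> nat \<Rightarrow> (nat \<Rightarrow> nat \<Rightarrow> real) \<Rightarrow> (nat \<Rightarrow> real)
     \<Rightarrow> (nat \<Rightarrow> hrow \<Rightarrow> real^'n) \<Rightarrow> (nat \<Rightarrow> arow \<Rightarrow> real^'n) \<Rightarrow> (nat \<Rightarrow> slot \<Rightarrow> real^'n)
     \<Rightarrow> (nat \<Rightarrow> slot \<Rightarrow> real^'n) \<Rightarrow> real" where
  "zobj c E N d r w lam zt z =
     (\<Sum>i\<in>nodes N.
        Gi E N d r i (z i) (w i)
        + (\<Sum>a\<in>arows E N i. lam i a \<bullet> mv Amat (slots E N i) (z i) a)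
        + (c/2) * (\<Sum>a\<in>arows E N i. (norm (mv Amat (slots E N i) (z i) a))\<^sup>2)
        + (c/2) * qf (Smat c E N i) (slots E N i) (\<lambda>s. z i s - zt i s))"

definition feasXY :: "(nat \<Rightarrow> nat \<Rightarrow> bool) \<Rightarrow> nat \<Rightarrow> nat set \<Rightarrow> (nat \<Rightarrow> real^'n)
     \<Rightarrow> (nat \<Rightarrow> slot \<Rightarrow> real^'n) \<Rightarrow> bool" where
  "feasXY E N anc apos z \<longleftrightarrow>
     (\<forall>i\<in>anc. z i SX = apos i) \<and>
     (\<forall>i\<in>nodes N. \<forall>j\<in>nbrs E N i. z i (SPp j) = z j (SPm i) \<and> z i (SQp j) = z j (SQm i))"

text \<open>Sequences generated by SP-ADMM-JCNL (z, w, lam indexed by time, node, block),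
  together with the auxiliary sequence ztil (defined for t \<ge> 1 by U_i ztil_i^{t+1} = ...,
  i.e. ztil_i^{t+1} = U_i^{-1}(...)).\<close>
definition sp_admm_jcnl ::
  "real \<Rightarrow> real \<Rightarrow> (nat \<Rightarrow> nat \<Rightarrow> bool) \<Rightarrow> nat \<Rightarrow> nat set \<Rightarrow> (nat \<Rightarrow> real^'n)
   \<Rightarrow> (nat \<Rightarrow> nat \<Rightarrow> real) \<Rightarrow> (nat \<Rightarrow> real)
   \<Rightarrow> (nat \<Rightarrow> nat \<Rightarrow> slot \<Rightarrow> real^'n) \<Rightarrow> (nat \<Rightarrow> nat \<Rightarrow> hrow \<Rightarrow> real^'n)
   \<Rightarrow> (nat \<Rightarrow> nat \<Rightarrow> arow \<Rightarrow> real^'n) \<Rightarrow> (nat \<Rightarrow> nat \<Rightarrow> slot \<Rightarrow> real^'n) \<Rightarrow> bool" where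
  "sp_admm_jcnl c \<rho> E N anc apos d r z w lam ztil \<longleftrightarrow>
     (\<forall>i\<in>nodes N. \<forall>a\<in>arows E N i. lam 0 i a = 0) \<and>
     (\<forall>t. feasXY E N anc apos (z (Suc t)) \<and>
          (\<forall>z'. feasXY E N anc apos z' \<longrightarrow>
               zobj c E N d r (w t) (lam t) (z t) (z (Suc t)) \<le> zobj c E N d r (w t) (lam t) (z t) z')) \<and>
     (\<forall>t. \<forall>i\<in>nodes N. \<forall>h\<in>hrows E N i.
          w (Suc t) i h = closest_point (cball 0 1)
                 (w t i h + (1/\<rho>) *\<^sub>R (Dw d r i h *\<^sub>R mv Hmat (slots E N i) (z (Suc t) i) h))) \<and>
     (\<forall>t. \<forall>i\<in>nodes N. \<forall>a\<in>arows E N i.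
          lam (Suc t) i a = lam t i a + c *\<^sub>R mv Amat (slots E N i) (z (Suc t) i) a) \<and>
     (\<forall>t. \<forall>i\<in>nodes N. \<forall>s\<in>slots E N i.
          mapply (Umat c E N i) (slots E N i) (ztil (Suc t) i) s
          = mtv Hmat (hrows E N i) (\<lambda>h. Dw d r i h *\<^sub>R w t i h) s
            - mtv Amat (arows E N i) (lam t i) s
            + c *\<^sub>R mapply (Smat c E N i) (slots E N i) (z t i) s)"

definition param_cond :: "real \<Rightarrow> real \<Rightarrow> nat \<Rightarrow> (nat \<Rightarrow> nat \<Rightarrow> bool) \<Rightarrow> nat
     \<Rightarrow> (nat \<Rightarrow> nat \<Rightarrow> real) \<Rightarrow> (nat \<Rightarrow> real) \<Rightarrow> bool" where
  "param_cond c \<rho> n E N d r \<longleftrightarrow>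
     (let Nmax = Max (deg E N ` nodes N);
          Nsum = (\<Sum>i\<in>nodes N. deg E N i);
          dmax = Max ({d i j | i j. i \<in> nodes N \<and> j \<in> nbrs E N i} \<union> r ` nodes N);
          taumin = Min ((\<lambda>i. 5 * (c+1)\<^sup>2 * (real (deg E N i))\<^sup>2
                              + (3*c\<^sup>2 + 4*c + 3) * real (deg E N i)) ` nodes N)
      in \<exists>\<kappa>1 \<kappa>2. \<kappa>1 > 0 \<and> \<kappa>2 > 0 \<and>
           \<kappa>1 \<ge> 6 * (2 * real Nmax + 2) * (1 + 1/c) \<and>
           \<kappa>2 \<ge> 3 * real Nsum * real n * (c+1)\<^sup>2 * (2 * real Nmax + 1) * \<kappa>1 / taumin \<and>
           \<rho> \<ge> 4 * dmax\<^sup>2 * (\<kappa>1 + \<kappa>2))"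

definition bounded_seq :: "nat \<Rightarrow> (nat \<Rightarrow> 'b set) \<Rightarrow> (nat \<Rightarrow> nat \<Rightarrow> 'b \<Rightarrow> real^'n) \<Rightarrow> bool" where
  "bounded_seq N idx f \<longleftrightarrow> (\<exists>B. \<forall>t\<ge>1. \<forall>i\<in>nodes N. \<forall>k\<in>idx i. norm (f t i k) \<le> B)"

end

theory Submission
  imports Defs
begin

lemma fin_nodes[simp]: "finite (nodes N)" by (simp add: nodes_def)
lemma fin_nbrs[simp]: "finite (nbrs E N i)" by (simp add: nbrs_def nodes_def)
lemma fin_slots[simp]: "finite (slots E N i)" by (simp add: slots_def)
lemma fin_hrows[simp]: "finite (hrows E N i)" by (simp add: hrows_def)
lemma fin_arows[simp]: "finite (arows E N i)" by (simp add: arows_def)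

lemma slot_mem[simp]:
  "SX \<in> slots E N i" "SY \<in> slots E N i"
  "j \<in> nbrs E N i \<Longrightarrow> SPm j \<in> slots E N i"
  "j \<in> nbrs E N i \<Longrightarrow> SPp j \<in> slots E N i"
  "j \<in> nbrs E N i \<Longrightarrow> SQm j \<in> slots E N i"
  "j \<in> nbrs E N i \<Longrightarrow> SQp j \<in> slots E N i"
  by (auto simp: slots_def)

lemma slots_cases:
  assumes "s \<in> slots E N i"
  obtains "s = SX" | "s = SY" | j where "j \<in> nbrs E N i" "s = SPm j"
    | j where "j \<in> nbrs E N i" "s = SPp j" | j where "j \<in> nbrs E N i" "s = SQm j"
    | j where "j \<in> nbrs E N i" "s = SQp j"
  using assms unfolding slots_def by auto

lemma hrows_cases:
  assumes "h \<in> hrows E N i"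
  obtains "h = HU" | j where "j \<in> nbrs E N i" "h = HV j"
  using assms unfolding hrows_def by auto

lemma arows_cases:
  assumes "a \<in> arows E N i"
  obtains j where "j \<in> nbrs E N i" "a = AP j" | j where "j \<in> nbrs E N i" "a = AQm j"
    | j where "j \<in> nbrs E N i" "a = AQp j"
  using assms unfolding arows_def by auto

lemma hrow_mem[simp]: "HU \<in> hrows E N i" "j \<in> nbrs E N i \<Longrightarrow> HV j \<in> hrows E N i"
  by (auto simp: hrows_def)
lemma arow_mem[simp]: "j \<in> nbrs E N i \<Longrightarrow> AP j \<in> arows E N i"
  "j \<in> nbrs E N i \<Longrightarrow> AQm j \<in> arows E N i" "j \<in> nbrs E N i \<Longrightarrow> AQp j \<in> arows E N i"
  by (auto simp: arows_def)

lemma sum_if2: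
  fixes f :: "'s \<Rightarrow> 'v::real_vector"
  assumes "finite C" "a \<in> C" "b \<in> C" "a \<noteq> b"
  shows "(\<Sum>s\<in>C. (if s = a then 1 else if s = b then -1 else 0) *\<^sub>R f s) = f a - f b"
proof -
  have "(\<lambda>s. (if s = a then 1 else if s = b then -1 else 0) *\<^sub>R f s)
      = (\<lambda>s. (if s = a then f a else 0) + (if s = b then - f b else 0))"
    using assms(4) by (auto simp: fun_eq_iff)
  then show ?thesis using assms by (simp only:) (simp add: sum.distrib)
qed

lemma Hv_HV: "j \<in> nbrs E N i \<Longrightarrow> mv Hmat (slots E N i) f (HV j) = f SX - f (SPp j)"
  unfolding mv_def by (simp add: sum_if2)
lemma Hv_HU: "mv Hmat (slots E N i) f HU = f SX - f SY"
  unfolding mv_def by (simp add: sum_if2)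
lemma Av_AP: "j \<in> nbrs E N i \<Longrightarrow> mv Amat (slots E N i) f (AP j) = f SX - f (SPm j)"
  unfolding mv_def by (simp add: sum_if2)
lemma Av_AQm: "j \<in> nbrs E N i \<Longrightarrow> mv Amat (slots E N i) f (AQm j) = f SY - f (SQm j)"
  unfolding mv_def by (simp add: sum_if2)
lemma Av_AQp: "j \<in> nbrs E N i \<Longrightarrow> mv Amat (slots E N i) f (AQp j) = f SY - f (SQp j)"
  unfolding mv_def by (simp add: sum_if2)

lemma mv_add: "mv M C (\<lambda>s. f s + g s) r = mv M C f r + mv M C g r"
  unfolding mv_def by (simp add: scaleR_right_distrib sum.distrib)
lemma mv_diff: "mv M C (\<lambda>s. f s - g s) r = mv M C f r - mv M C g r"
  unfolding mv_def by (simp add: scaleR_right_diff_distrib sum_subtractf)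
lemma mv_scale: "mv M C (\<lambda>s. x *\<^sub>R f s) r = x *\<^sub>R mv M C f r"
  unfolding mv_def by (simp add: scaleR_sum_right mult.commute)

lemma Hsign: "s \<noteq> s' \<Longrightarrow> Hmat r s * Hmat r s' \<le> 0"
  by (cases r) auto
lemma Asign: "s \<noteq> s' \<Longrightarrow> Amat r s * Amat r s' \<le> 0"
  by (cases r) auto
lemma Habs: "\<bar>Hmat r s\<bar> \<le> 1" by (cases r) auto
lemma Aabs: "\<bar>Amat r s\<bar> \<le> 1" by (cases r) auto

lemma absm_gram:
  assumes "\<And>r s s'. s \<noteq> s' \<Longrightarrow> M r s * M r s' \<le> 0"
  shows "absm (gram M R) s s' = gram (\<lambda>r s. \<bar>M r s\<bar>) R s s'"
proof (cases "s = s'")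
  case True
  then show ?thesis unfolding absm_def gram_def
    by (simp add: abs_mult_self_eq sum_nonneg abs_of_nonneg)
next
  case False
  have "(\<Sum>r\<in>R. M r s * M r s') \<le> 0" by (rule sum_nonpos) (use assms False in auto)
  then have "\<bar>\<Sum>r\<in>R. M r s * M r s'\<bar> = (\<Sum>r\<in>R. - (M r s * M r s'))"
    by (simp add: sum_negf)
  also have "\<dots> = (\<Sum>r\<in>R. \<bar>M r s\<bar> * \<bar>M r s'\<bar>)"
    by (rule sum.cong) (use assms False in \<open>auto simp: abs_mult[symmetric] abs_of_nonpos\<close>)
  finally show ?thesis unfolding absm_def gram_def .
qed

definition bil :: "('s \<Rightarrow> 's \<Rightarrow> real) \<Rightarrow> 's set \<Rightarrow> ('s \<Rightarrow> real^'n) \<Rightarrow> ('s \<Rightarrow> real^'n) \<Rightarrow> real" where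
  "bil K C f g = (\<Sum>s\<in>C. \<Sum>s'\<in>C. K s s' * (f s \<bullet> g s'))"

lemma qf_bil: "qf K C f = bil K C f f" unfolding qf_def bil_def ..

lemma qf_gram:
  assumes "finite R" "finite C"
  shows "qf (gram M R) C f = (\<Sum>r\<in>R. (norm (mv M C f r))\<^sup>2)"
proof -
  have "(\<Sum>r\<in>R. (norm (mv M C f r))\<^sup>2) = (\<Sum>r\<in>R. \<Sum>s\<in>C. \<Sum>s'\<in>C. M r s' * (M r s * (f s \<bullet> f s')))"
    unfolding mv_def power2_norm_eq_inner
    by (simp add: inner_sum_left inner_sum_right mult.assoc sum_distrib_left inner_commute)
  also have "\<dots> = (\<Sum>s\<in>C. \<Sum>r\<in>R. \<Sum>s'\<in>C. M r s' * (M r s * (f s \<bullet> f s')))"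
    by (rule sum.swap)
  also have "\<dots> = (\<Sum>s\<in>C. \<Sum>s'\<in>C. \<Sum>r\<in>R. M r s' * (M r s * (f s \<bullet> f s')))"
    by (simp add: sum.swap[of _ R])
  also have "\<dots> = qf (gram M R) C f"
    unfolding qf_def gram_def by (simp add: sum_distrib_left mult.commute mult.left_commute)
  finally show ?thesis by simp
qed

lemma qf_add: "qf (\<lambda>s s'. K1 s s' + a * K2 s s') C f = qf K1 C f + a * qf K2 C f"
  unfolding qf_def by (simp add: algebra_simps sum.distrib sum_distrib_left)

lemma bil_sym:
  assumes "\<And>s s'. K s s' = K s' s"
  shows "bil K C f g = bil K C g f"
  unfolding bil_def
  by (subst sum.swap) (simp add: assms inner_commute)

lemma bil_diff1: "bil K C (\<lambda>s. f s - g s) h = bil K C f h - bil K C g h"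
  unfolding bil_def by (simp add: inner_diff_left algebra_simps sum_subtractf)
lemma bil_add1: "bil K C (\<lambda>s. f s + g s) h = bil K C f h + bil K C g h"
  unfolding bil_def by (simp add: inner_add_left algebra_simps sum.distrib)
lemma bil_scale1: "bil K C (\<lambda>s. x *\<^sub>R f s) h = x * bil K C f h"
  unfolding bil_def by (simp add: algebra_simps sum_distrib_left)
lemma bil_diff2: "bil K C h (\<lambda>s. f s - g s) = bil K C h f - bil K C h g"
  unfolding bil_def by (simp add: inner_diff_right algebra_simps sum_subtractf)
lemma bil_add2: "bil K C h (\<lambda>s. f s + g s) = bil K C h f + bil K C h g"
  unfolding bil_def by (simp add: inner_add_right algebra_simps sum.distrib)
lemma bil_scale2: "bil K C h (\<lambda>s. x *\<^sub>R f s) = x * bil K C h f"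
  unfolding bil_def by (simp add: algebra_simps sum_distrib_left)

lemma qf_polar:
  assumes "\<And>s s'. K s s' = K s' s"
  shows "qf K C (\<lambda>s. f s + x *\<^sub>R g s) = qf K C f + 2 * x * bil K C f g + x\<^sup>2 * qf K C g"
  unfolding qf_bil bil_add1 bil_add2 bil_scale1 bil_scale2 using bil_sym[OF assms, where C=C and f=g and g=f]
  by (simp add: power2_eq_square algebra_simps)

lemma qf_diff_id:
  assumes "\<And>s s'. K s s' = K s' s"
  shows "2 * bil K C (\<lambda>s. a s - b s) a = qf K C a - qf K C b + qf K C (\<lambda>s. a s - b s)"
  unfolding qf_bil bil_diff1 bil_diff2 using bil_sym[OF assms, where C=C and f=a and g=b]
  by (simp add: algebra_simps)

lemma bil_bound:
  assumes "\<And>s. s \<in> C \<Longrightarrow> norm (f s) \<le> \<alpha>" "\<And>s. s \<in> C \<Longrightarrow> norm (g s) \<le> \<beta>"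
    "\<And>s s'. s \<in> C \<Longrightarrow> s' \<in> C \<Longrightarrow> \<bar>K s s'\<bar> \<le> \<kappa>"
  shows "\<bar>bil K C f g\<bar> \<le> real (card C) * real (card C) * \<kappa> * \<alpha> * \<beta>"
proof -
  have t: "\<bar>K s s' * (f s \<bullet> g s')\<bar> \<le> \<kappa> * \<alpha> * \<beta>" if "s \<in> C" "s' \<in> C" for s s'
  proof -
    have "0 \<le> \<alpha>" using assms(1)[OF that(1)] norm_ge_zero[of "f s"] by linarith
    have "0 \<le> \<beta>" using assms(2)[OF that(1)] norm_ge_zero[of "g s"] by linarith
    have "\<bar>f s \<bullet> g s'\<bar> \<le> norm (f s) * norm (g s')" by (rule Cauchy_Schwarz_ineq2)
    also have "\<dots> \<le> \<alpha> * \<beta>" by (rule mult_mono) (use assms that \<open>0 \<le> \<alpha>\<close> \<open>0 \<le> \<beta>\<close> in auto)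
    finally have fg: "\<bar>f s \<bullet> g s'\<bar> \<le> \<alpha> * \<beta>" .
    have k: "\<bar>K s s'\<bar> \<le> \<kappa>" using assms(3) that by auto
    have "\<bar>K s s'\<bar> * \<bar>f s \<bullet> g s'\<bar> \<le> \<kappa> * (\<alpha> * \<beta>)"
      by (rule mult_mono[OF k fg]) (use k in auto)
    then show ?thesis by (simp add: abs_mult mult.assoc)
  qed
  have "\<bar>bil K C f g\<bar> \<le> (\<Sum>s\<in>C. \<bar>\<Sum>s'\<in>C. K s s' * (f s \<bullet> g s')\<bar>)"
    unfolding bil_def by (rule sum_abs)
  also have "\<dots> \<le> (\<Sum>s\<in>C. \<Sum>s'\<in>C. \<bar>K s s' * (f s \<bullet> g s')\<bar>)"
    by (rule sum_mono) (rule sum_abs)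
  also have "\<dots> \<le> (\<Sum>s\<in>C. \<Sum>s'\<in>C. \<kappa> * \<alpha> * \<beta>)"
    by (rule sum_mono, rule sum_mono) (use t in auto)
  also have "\<dots> = real (card C) * real (card C) * \<kappa> * \<alpha> * \<beta>" by simp
  finally show ?thesis .
qed

lemma quad_zero:
  fixes a b :: real
  assumes "\<And>x. 0 \<le> x * a + x\<^sup>2 * b"
  shows "a = 0"
proof (cases "b \<le> 0")
  case True
  have h: "0 \<le> (-a) * a + (-a)\<^sup>2 * b" by (rule assms)
  have "0 \<le> (-a)\<^sup>2" by simp
  then have "(-a)\<^sup>2 * b \<le> 0" using True by (rule mult_nonneg_nonpos)
  then have "a * a \<le> 0" using h by simp
  then show ?thesis by (metis mult_le_0_iff linorder_not_le mult_eq_0_iff order_antisym_conv zero_le_square)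
next
  case False
  then have bp: "b > 0" by simp
  define x where "x = -a/(2*b)"
  have e: "x * a + x\<^sup>2 * b = - (a * a / (4*b))"
    unfolding x_def power2_eq_square using bp by (simp add: field_simps)
  have "0 \<le> x * a + x\<^sup>2 * b" by (rule assms)
  then have "a * a / (4*b) \<le> 0" unfolding e by simp
  moreover have "0 \<le> a * a / (4*b)" using bp by simp
  ultimately have "a * a / (4*b) = 0" by linarith
  then have "a * a = 0" using bp by simp
  then show ?thesis by simp
qed

lemma sum2_le:
  fixes f :: "'i \<Rightarrow> 'h \<Rightarrow> real"
  assumes "\<And>i h. i \<in> I \<Longrightarrow> h \<in> R i \<Longrightarrow> f i h \<le> B"
  shows "(\<Sum>i\<in>I. \<Sum>h\<in>R i. f i h) \<le> (\<Sum>i\<in>I. real (card (R i))) * B"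
proof -
  have "(\<Sum>i\<in>I. \<Sum>h\<in>R i. f i h) \<le> (\<Sum>i\<in>I. real (card (R i)) * B)"
    by (rule sum_mono) (use sum_bounded_above[of "R _" "f _" B] assms in auto)
  then show ?thesis by (simp add: sum_distrib_right)
qed

lemma entry_le_sqrt:
  fixes f :: "'i \<Rightarrow> 'h \<Rightarrow> real"
  assumes "finite I" "\<And>i. finite (R i)" "i \<in> I" "h \<in> R i" "0 \<le> X"
    "\<And>i h. 0 \<le> f i h"
  shows "sqrt (f i h) \<le> sqrt ((\<Sum>i\<in>I. \<Sum>h\<in>R i. f i h) + X)"
proof -
  have "f i h \<le> (\<Sum>h\<in>R i. f i h)" by (rule member_le_sum) (use assms in auto)
  also have "\<dots> \<le> (\<Sum>i\<in>I. \<Sum>h\<in>R i. f i h)"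
    by (rule member_le_sum[where f = "\<lambda>i. \<Sum>h\<in>R i. f i h"]) (use assms in \<open>auto intro: sum_nonneg\<close>)
  finally show ?thesis using assms(5) by simp
qed

lemma sqrt_trick:
  assumes "0 \<le> L" "0 \<le> X" "L \<le> X * sqrt L"
  shows "sqrt L \<le> X"
proof (cases "L = 0")
  case True then show ?thesis using assms by simp
next
  case False
  then have p: "sqrt L > 0" using assms by simp
  have "sqrt L * sqrt L \<le> X * sqrt L" using assms by simp
  then show ?thesis unfolding mult_le_cancel_right_pos[OF p] .
qed

lemma path_bound:
  fixes E :: "'a \<Rightarrow> 'a \<Rightarrow> bool"
  assumes "E\<^sup>*\<^sup>* i j"
  shows "\<exists>k::nat. \<forall>(f::'a \<Rightarrow> 'v::real_normed_vector) m.
           (\<forall>a b. E a b \<longrightarrow> norm (f b) \<le> norm (f a) + m) \<longrightarrow> norm (f j) \<le> norm (f i) + real k * m"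
  using assms
proof (induction rule: rtranclp_induct)
  case base
  show ?case by (rule exI[of _ 0]) simp
next
  case (step y z)
  then obtain k where k: "\<forall>(f::'a \<Rightarrow> 'v) m.
           (\<forall>a b. E a b \<longrightarrow> norm (f b) \<le> norm (f a) + m) \<longrightarrow> norm (f y) \<le> norm (f i) + real k * m" by blast
  show ?case
  proof (rule exI[of _ "Suc k"], intro allI impI)
    fix f :: "'a \<Rightarrow> 'v" and m assume h: "\<forall>a b. E a b \<longrightarrow> norm (f b) \<le> norm (f a) + m"
    have "norm (f z) \<le> norm (f y) + m" using h step by blast
    also have "\<dots> \<le> norm (f i) + real k * m + m" using k h by fastforce
    finally show "norm (f z) \<le> norm (f i) + real (Suc k) * m" by (simp add: algebra_simps)
  qed
qed

lemma norm_expand: "(norm (a + x *\<^sub>R b))\<^sup>2 = (norm a)\<^sup>2 + 2 * x * (a \<bullet> b) + x\<^sup>2 * (norm b)\<^sup>2"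
  for a b :: "'a::real_inner"
  unfolding power2_norm_eq_inner by (simp add: inner_add inner_commute power2_eq_square algebra_simps)

lemma sum_norm_expand:
  "(\<Sum>h\<in>R. (norm (f h + x *\<^sub>R g h))\<^sup>2) = (\<Sum>h\<in>R. (norm (f h))\<^sup>2) + 2 * x * (\<Sum>h\<in>R. f h \<bullet> g h) + x\<^sup>2 * (\<Sum>h\<in>R. (norm (g h))\<^sup>2)"
  for f g :: "'h \<Rightarrow> 'a::real_inner"
  by (simp add: norm_expand sum.distrib sum_distrib_left)

lemma sum_inner_expand:
  "(\<Sum>h\<in>R. u h * (p h \<bullet> (f h + x *\<^sub>R g h))) = (\<Sum>h\<in>R. u h * (p h \<bullet> f h)) + x * (\<Sum>h\<in>R. u h * (p h \<bullet> g h))"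
  for f g p :: "'h \<Rightarrow> 'a::real_inner"
  by (simp add: inner_add_right sum.distrib sum_distrib_left algebra_simps)

lemma sum_inner_expand2:
  "(\<Sum>h\<in>R. p h \<bullet> (f h + x *\<^sub>R g h)) = (\<Sum>h\<in>R. p h \<bullet> f h) + x * (\<Sum>h\<in>R. p h \<bullet> g h)"
  for f g p :: "'h \<Rightarrow> 'a::real_inner"
  by (simp add: inner_add_right sum.distrib sum_distrib_left algebra_simps)

lemma gram_abs_le:
  assumes "\<And>r s. \<bar>M r s\<bar> \<le> 1" "finite R"
  shows "\<bar>gram M R s s'\<bar> \<le> real (card R)"
proof -
  have "\<bar>gram M R s s'\<bar> \<le> (\<Sum>r\<in>R. \<bar>M r s * M r s'\<bar>)" unfolding gram_def by (rule sum_abs)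
  also have "\<dots> \<le> (\<Sum>r\<in>R. 1)"
  proof (rule sum_mono)
    fix r assume "r \<in> R"
    have "\<bar>M r s\<bar> * \<bar>M r s'\<bar> \<le> 1 * 1" by (rule mult_mono) (use assms in auto)
    then show "\<bar>M r s * M r s'\<bar> \<le> 1" by (simp add: abs_mult)
  qed
  finally show ?thesis by simp
qed

lemma Smat_sym: "Smat c E N i s s' = Smat c E N i s' s"
  unfolding Smat_def absm_def gram_def by (simp add: mult.commute)

lemma qfS_nonneg:
  assumes "c > 0"
  shows "0 \<le> qf (Smat c E N i) (slots E N i) f"
proof -
  have eqA: "absm (gram Amat (arows E N i)) = gram (\<lambda>r s. \<bar>Amat r s\<bar>) (arows E N i)"
    by (intro ext absm_gram Asign)
  have eqH: "absm (gram Hmat (hrows E N i)) = gram (\<lambda>r s. \<bar>Hmat r s\<bar>) (hrows E N i)"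
    by (intro ext absm_gram Hsign)
  have "qf (Smat c E N i) (slots E N i) f
     = qf (absm (gram Amat (arows E N i))) (slots E N i) f + (1/c) * qf (absm (gram Hmat (hrows E N i))) (slots E N i) f"
    unfolding Smat_def by (rule qf_add)
  also have "\<dots> = (\<Sum>r\<in>arows E N i. (norm (mv (\<lambda>r s. \<bar>Amat r s\<bar>) (slots E N i) f r))\<^sup>2)
      + (1/c) * (\<Sum>r\<in>hrows E N i. (norm (mv (\<lambda>r s. \<bar>Hmat r s\<bar>) (slots E N i) f r))\<^sup>2)"
    unfolding eqA eqH by (simp add: qf_gram)
  also have "\<dots> \<ge> 0" using assms by (intro add_nonneg_nonneg mult_nonneg_nonneg sum_nonneg) auto
  finally show ?thesis .
qed

lemma Smat_abs_le:
  assumes "c > 0"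
  shows "\<bar>Smat c E N i s s'\<bar> \<le> real (card (arows E N i)) + real (card (hrows E N i)) / c"
proof -
  have a: "\<bar>gram Amat (arows E N i) s s'\<bar> \<le> real (card (arows E N i))" by (rule gram_abs_le) (auto intro: Aabs)
  have h: "\<bar>gram Hmat (hrows E N i) s s'\<bar> \<le> real (card (hrows E N i))" by (rule gram_abs_le) (auto intro: Habs)
  have h2: "(1/c) * \<bar>gram Hmat (hrows E N i) s s'\<bar> \<le> (1/c) * real (card (hrows E N i))"
    using h assms by (intro mult_left_mono) auto
  have "\<bar>Smat c E N i s s'\<bar> \<le> \<bar>gram Amat (arows E N i) s s'\<bar> + (1/c) * \<bar>gram Hmat (hrows E N i) s s'\<bar>"
    unfolding Smat_def absm_def using assms by simp
  then show ?thesis using a h2 by simp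
qed

lemma node_alg:
  fixes P Q R D1 D2 L1 L2 P' Q' R' S1 S2 S3 x c :: real
  shows "(1/2) * (P + 2*x*Q + x\<^sup>2*R) - (D1 + x*D2)
 + (L1 + x*L2)
 + (c/2) * (P' + 2*x*Q' + x\<^sup>2*R')
 + (c/2) * (S1 + 2*x*S2 + x\<^sup>2*S3)
 = ((1/2)*P - D1 + L1 + (c/2)*P' + (c/2)*S1) + x*(Q - D2 + L2 + c*Q' + c*S2) + x\<^sup>2*((1/2)*R + (c/2)*R' + (c/2)*S3)"
  by (simp add: algebra_simps)

locale admm =
  fixes E :: "nat \<Rightarrow> nat \<Rightarrow> bool" and N :: nat and anc :: "nat set"
    and apos :: "nat \<Rightarrow> real^'n" and d :: "nat \<Rightarrow> nat \<Rightarrow> real" and r :: "nat \<Rightarrow> real"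
    and c \<rho> :: real
    and z :: "nat \<Rightarrow> nat \<Rightarrow> slot \<Rightarrow> real^'n" and w :: "nat \<Rightarrow> nat \<Rightarrow> hrow \<Rightarrow> real^'n"
    and lam :: "nat \<Rightarrow> nat \<Rightarrow> arow \<Rightarrow> real^'n" and ztil :: "nat \<Rightarrow> nat \<Rightarrow> slot \<Rightarrow> real^'n"
  assumes E_nodes: "\<And>i j. E i j \<Longrightarrow> i \<in> nodes N \<and> j \<in> nodes N"
    and E_sym: "\<And>i j. E i j \<Longrightarrow> E j i"
    and connected: "\<And>i j. i \<in> nodes N \<Longrightarrow> j \<in> nodes N \<Longrightarrow> E\<^sup>*\<^sup>* i j"
    and anc_sub: "anc \<subseteq> nodes N" and anc_ne: "anc \<noteq> {}"
    and c_pos: "c > 0"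
    and alg: "sp_admm_jcnl c \<rho> E N anc apos d r z w lam ztil"
begin

abbreviation "Hv i f h \<equiv> mv Hmat (slots E N i) f h"
abbreviation "Av i f a \<equiv> mv Amat (slots E N i) f a"

lemma nbrsI: "E i j \<Longrightarrow> j \<in> nbrs E N i" using E_nodes by (auto simp: nbrs_def)
lemma nbrsD: assumes "j \<in> nbrs E N i" shows "E i j" "E j i" "j \<in> nodes N" "i \<in> nbrs E N j"
  using assms E_nodes E_sym by (auto simp: nbrs_def)
lemma nbrs_node: "j \<in> nbrs E N i \<Longrightarrow> i \<in> nodes N" using E_nodes by (auto simp: nbrs_def)

lemma lam0: "i \<in> nodes N \<Longrightarrow> a \<in> arows E N i \<Longrightarrow> lam 0 i a = 0"
  using alg unfolding sp_admm_jcnl_def by blast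
lemma zfeas: "feasXY E N anc apos (z (Suc t))"
  using alg unfolding sp_admm_jcnl_def by blast
lemma zmin: "feasXY E N anc apos z' \<Longrightarrow>
    zobj c E N d r (w t) (lam t) (z t) (z (Suc t)) \<le> zobj c E N d r (w t) (lam t) (z t) z'"
  using alg unfolding sp_admm_jcnl_def by blast
lemma wupd: "i \<in> nodes N \<Longrightarrow> h \<in> hrows E N i \<Longrightarrow> w (Suc t) i h = closest_point (cball 0 1)
                 (w t i h + (1/\<rho>) *\<^sub>R (Dw d r i h *\<^sub>R mv Hmat (slots E N i) (z (Suc t) i) h))"
  using alg unfolding sp_admm_jcnl_def by blast
lemma lamupd: "i \<in> nodes N \<Longrightarrow> a \<in> arows E N i \<Longrightarrow>
   lam (Suc t) i a = lam t i a + c *\<^sub>R mv Amat (slots E N i) (z (Suc t) i) a"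
  using alg unfolding sp_admm_jcnl_def by blast
lemma ztileq: "i \<in> nodes N \<Longrightarrow> s \<in> slots E N i \<Longrightarrow>
          mapply (Umat c E N i) (slots E N i) (ztil (Suc t) i) s
          = mtv Hmat (hrows E N i) (\<lambda>h. Dw d r i h *\<^sub>R w t i h) s
            - mtv Amat (arows E N i) (lam t i) s
            + c *\<^sub>R mapply (Smat c E N i) (slots E N i) (z t i) s"
  using alg unfolding sp_admm_jcnl_def by blast

definition feas0 :: "(nat \<Rightarrow> slot \<Rightarrow> real^'n) \<Rightarrow> bool" where
  "feas0 v \<longleftrightarrow> (\<forall>i\<in>anc. v i SX = 0) \<and>
     (\<forall>i\<in>nodes N. \<forall>j\<in>nbrs E N i. v i (SPp j) = v j (SPm i) \<and> v i (SQp j) = v j (SQm i))"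

lemma feas0_diff: "feasXY E N anc apos u \<Longrightarrow> feasXY E N anc apos u' \<Longrightarrow> feas0 (\<lambda>i s. u i s - u' i s)"
  unfolding feasXY_def feas0_def by auto
lemma feas_add: "feasXY E N anc apos u \<Longrightarrow> feas0 v \<Longrightarrow> feasXY E N anc apos (\<lambda>i s. u i s + x *\<^sub>R v i s)"
  unfolding feasXY_def feas0_def by auto
lemma feas0_add: "feas0 u \<Longrightarrow> feas0 v \<Longrightarrow> feas0 (\<lambda>i s. u i s + x *\<^sub>R v i s)"
  unfolding feas0_def by auto
lemma feas0_zero: "feas0 (\<lambda>i s. 0)" unfolding feas0_def by auto

definition ax :: "nat \<Rightarrow> real^'n" where "ax i = (if i \<in> anc then apos i else 0)"
definition zh :: "nat \<Rightarrow> slot \<Rightarrow> real^'n" where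
  "zh i s = (case s of SX \<Rightarrow> ax i | SPm j \<Rightarrow> ax i | SPp j \<Rightarrow> ax j | _ \<Rightarrow> 0)"
definition zb :: "nat \<Rightarrow> nat \<Rightarrow> slot \<Rightarrow> real^'n" where "zb t i s = z t i s - zh i s"

lemma zh_feas: "feasXY E N anc apos zh"
  unfolding feasXY_def zh_def ax_def by auto

lemma feas0_zb: "feas0 (zb (Suc t))"
  unfolding zb_def by (rule feas0_diff[OF zfeas zh_feas])

lemma Av_zh: assumes "a \<in> arows E N i" shows "Av i (zh i) a = 0"
  using assms by (cases rule: arows_cases) (auto simp: Av_AP Av_AQm Av_AQp zh_def)

lemma z_split: "z t i = (\<lambda>s. zb t i s + zh i s)" by (simp add: zb_def fun_eq_iff)

lemma zb_fun: "zb t i = (\<lambda>s. z t i s - zh i s)" by (rule ext) (simp add: zb_def)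

lemma Av_zb: "a \<in> arows E N i \<Longrightarrow> Av i (zb t i) a = Av i (z t i) a"
  by (simp add: zb_fun mv_diff Av_zh)

definition lin :: "nat \<Rightarrow> (nat \<Rightarrow> slot \<Rightarrow> real^'n) \<Rightarrow> real" where
  "lin t v = (\<Sum>i\<in>nodes N.
       (\<Sum>h\<in>hrows E N i. Hv i (z (Suc t) i) h \<bullet> Hv i (v i) h) 
     - (\<Sum>h\<in>hrows E N i. Dw d r i h * (w t i h \<bullet> Hv i (v i) h))
     + (\<Sum>a\<in>arows E N i. lam t i a \<bullet> Av i (v i) a)
     + c * (\<Sum>a\<in>arows E N i. Av i (z (Suc t) i) a \<bullet> Av i (v i) a)
     + c * bil (Smat c E N i) (slots E N i) (\<lambda>s. z (Suc t) i s - z t i s) (v i))"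

definition quad :: "(nat \<Rightarrow> slot \<Rightarrow> real^'n) \<Rightarrow> real" where
  "quad v = (\<Sum>i\<in>nodes N. (1/2) * (\<Sum>h\<in>hrows E N i. (norm (Hv i (v i) h))\<^sup>2)
     + (c/2) * (\<Sum>a\<in>arows E N i. (norm (Av i (v i) a))\<^sup>2)
     + (c/2) * qf (Smat c E N i) (slots E N i) (v i))"

lemma zobj_expand:
  "zobj c E N d r (w t) (lam t) (z t) (\<lambda>i s. z (Suc t) i s + x *\<^sub>R v i s)
   = zobj c E N d r (w t) (lam t) (z t) (z (Suc t)) + x * lin t v + x\<^sup>2 * quad v"
proof -
  let ?z = "z (Suc t)"
  define A where "A i = Gi E N d r i (?z i) (w t i)
        + (\<Sum>a\<in>arows E N i. lam t i a \<bullet> Av i (?z i) a)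
        + (c/2) * (\<Sum>a\<in>arows E N i. (norm (Av i (?z i) a))\<^sup>2)
        + (c/2) * qf (Smat c E N i) (slots E N i) (\<lambda>s. ?z i s - z t i s)" for i
  define B where "B i = (\<Sum>h\<in>hrows E N i. Hv i (?z i) h \<bullet> Hv i (v i) h) 
         - (\<Sum>h\<in>hrows E N i. Dw d r i h * (w t i h \<bullet> Hv i (v i) h))
         + (\<Sum>a\<in>arows E N i. lam t i a \<bullet> Av i (v i) a)
         + c * (\<Sum>a\<in>arows E N i. Av i (?z i) a \<bullet> Av i (v i) a)
         + c * bil (Smat c E N i) (slots E N i) (\<lambda>s. ?z i s - z t i s) (v i)" for i
  define C where "C i = (1/2) * (\<Sum>h\<in>hrows E N i. (norm (Hv i (v i) h))\<^sup>2)
         + (c/2) * (\<Sum>a\<in>arows E N i. (norm (Av i (v i) a))\<^sup>2)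
         + (c/2) * qf (Smat c E N i) (slots E N i) (v i)" for i
  have node: "Gi E N d r i (\<lambda>s. ?z i s + x *\<^sub>R v i s) (w t i)
        + (\<Sum>a\<in>arows E N i. lam t i a \<bullet> Av i (\<lambda>s. ?z i s + x *\<^sub>R v i s) a)
        + (c/2) * (\<Sum>a\<in>arows E N i. (norm (Av i (\<lambda>s. ?z i s + x *\<^sub>R v i s) a))\<^sup>2)
        + (c/2) * qf (Smat c E N i) (slots E N i) (\<lambda>s. ?z i s + x *\<^sub>R v i s - z t i s)
      = A i + x * B i + x\<^sup>2 * C i" for i
  proof -
    have q: "(\<lambda>s. ?z i s + x *\<^sub>R v i s - z t i s) = (\<lambda>s. (?z i s - z t i s) + x *\<^sub>R v i s)"
      by (simp add: fun_eq_iff algebra_simps)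
    show ?thesis
      unfolding A_def B_def C_def Gi_def q qf_polar[OF Smat_sym] mv_add mv_scale sum_norm_expand sum_inner_expand sum_inner_expand2
      by (rule node_alg)
  qed
  have e1: "zobj c E N d r (w t) (lam t) (z t) (\<lambda>i s. z (Suc t) i s + x *\<^sub>R v i s)
       = (\<Sum>i\<in>nodes N. A i + x * B i + x\<^sup>2 * C i)"
    unfolding zobj_def node by (rule refl)
  have e2: "zobj c E N d r (w t) (lam t) (z t) (z (Suc t)) = (\<Sum>i\<in>nodes N. A i)"
    unfolding zobj_def A_def ..
  have e3: "lin t v = (\<Sum>i\<in>nodes N. B i)" unfolding lin_def B_def ..
  have e4: "quad v = (\<Sum>i\<in>nodes N. C i)" unfolding quad_def C_def ..
  have "(\<Sum>i\<in>nodes N. A i + x * B i + x\<^sup>2 * C i)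
     = (\<Sum>i\<in>nodes N. A i) + (\<Sum>i\<in>nodes N. x * B i) + (\<Sum>i\<in>nodes N. x\<^sup>2 * C i)"
    by (simp only: sum.distrib)
  also have "\<dots> = (\<Sum>i\<in>nodes N. A i) + x * (\<Sum>i\<in>nodes N. B i) + x\<^sup>2 * (\<Sum>i\<in>nodes N. C i)"
    by (simp only: sum_distrib_left)
  finally show ?thesis unfolding e1 e2 e3 e4 .
qed

lemma foc: assumes "feas0 v" shows "lin t v = 0"
proof (rule quad_zero)
  fix x :: real
  have "zobj c E N d r (w t) (lam t) (z t) (z (Suc t))
      \<le> zobj c E N d r (w t) (lam t) (z t) (\<lambda>i s. z (Suc t) i s + x *\<^sub>R v i s)"
    by (rule zmin[OF feas_add[OF zfeas assms]])
  then show "0 \<le> x * lin t v + x\<^sup>2 * quad v" unfolding zobj_expand by simp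
qed

end

lemma two_inner_le: "2 * (a \<bullet> b) \<le> (norm a)\<^sup>2 + (norm b)\<^sup>2" for a b :: "'a::real_inner"
proof -
  have "0 \<le> (norm (a - b))\<^sup>2" by simp
  also have "\<dots> = (norm a)\<^sup>2 - 2 * (a \<bullet> b) + (norm b)\<^sup>2"
    unfolding power2_norm_eq_inner by (simp add: inner_diff inner_commute)
  finally show ?thesis by simp
qed

context admm begin

definition V :: "nat \<Rightarrow> real" where
  "V t = c * (\<Sum>i\<in>nodes N. qf (Smat c E N i) (slots E N i) (zb t i))
       + (1/c) * (\<Sum>i\<in>nodes N. \<Sum>a\<in>arows E N i. (norm (lam t i a))\<^sup>2)"

definition g :: "nat \<Rightarrow> nat \<Rightarrow> hrow \<Rightarrow> real^'n" where
  "g t i h = Dw d r i h *\<^sub>R w t i h - Hv i (zh i) h"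

lemma node_fej:
  assumes i: "i \<in> nodes N"
  shows "2 * ((\<Sum>h\<in>hrows E N i. Hv i (z (Suc t) i) h \<bullet> Hv i (zb (Suc t) i) h) 
     - (\<Sum>h\<in>hrows E N i. Dw d r i h * (w t i h \<bullet> Hv i (zb (Suc t) i) h))
     + (\<Sum>a\<in>arows E N i. lam t i a \<bullet> Av i (zb (Suc t) i) a)
     + c * (\<Sum>a\<in>arows E N i. Av i (z (Suc t) i) a \<bullet> Av i (zb (Suc t) i) a)
     + c * bil (Smat c E N i) (slots E N i) (\<lambda>s. z (Suc t) i s - z t i s) (zb (Suc t) i))
   = 2 * (\<Sum>h\<in>hrows E N i. (norm (Hv i (zb (Suc t) i) h))\<^sup>2)
     - 2 * (\<Sum>h\<in>hrows E N i. g t i h \<bullet> Hv i (zb (Suc t) i) h)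
     + (1/c) * ((\<Sum>a\<in>arows E N i. (norm (lam (Suc t) i a))\<^sup>2) - (\<Sum>a\<in>arows E N i. (norm (lam t i a))\<^sup>2))
     + c * (\<Sum>a\<in>arows E N i. (norm (Av i (zb (Suc t) i) a))\<^sup>2)
     + c * (qf (Smat c E N i) (slots E N i) (zb (Suc t) i) - qf (Smat c E N i) (slots E N i) (zb t i))
     + c * qf (Smat c E N i) (slots E N i) (\<lambda>s. zb (Suc t) i s - zb t i s)"
proof -
  let ?b = "zb (Suc t) i"
  have h1: "(\<Sum>h\<in>hrows E N i. Hv i (z (Suc t) i) h \<bullet> Hv i ?b h)
      - (\<Sum>h\<in>hrows E N i. Dw d r i h * (w t i h \<bullet> Hv i ?b h))
      = (\<Sum>h\<in>hrows E N i. (norm (Hv i ?b h))\<^sup>2) - (\<Sum>h\<in>hrows E N i. g t i h \<bullet> Hv i ?b h)"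
  proof -
    have "Hv i (z (Suc t) i) h \<bullet> Hv i ?b h - Dw d r i h * (w t i h \<bullet> Hv i ?b h)
        = (norm (Hv i ?b h))\<^sup>2 - g t i h \<bullet> Hv i ?b h" for h
      unfolding g_def z_split[of "Suc t" i] mv_add power2_norm_eq_inner
      by (simp add: inner_add_left inner_diff_left)
    then show ?thesis by (simp add: sum_subtractf[symmetric])
  qed
  have a1: "Av i (z (Suc t) i) a = Av i ?b a" if "a \<in> arows E N i" for a
    using Av_zb[OF that] by simp
  have l1: "lam (Suc t) i a = lam t i a + c *\<^sub>R Av i ?b a" if "a \<in> arows E N i" for a
    using lamupd[OF i that] a1[OF that] by simp
  have l2: "(\<Sum>a\<in>arows E N i. (norm (lam (Suc t) i a))\<^sup>2)
     = (\<Sum>a\<in>arows E N i. (norm (lam t i a))\<^sup>2) + 2 * c * (\<Sum>a\<in>arows E N i. lam t i a \<bullet> Av i ?b a)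
       + c\<^sup>2 * (\<Sum>a\<in>arows E N i. (norm (Av i ?b a))\<^sup>2)"
    by (simp add: l1 sum_norm_expand cong: sum.cong)
  have a2: "(\<Sum>a\<in>arows E N i. Av i (z (Suc t) i) a \<bullet> Av i ?b a) = (\<Sum>a\<in>arows E N i. (norm (Av i ?b a))\<^sup>2)"
    by (rule sum.cong) (simp_all add: a1 power2_norm_eq_inner)
  have d1: "(\<lambda>s. z (Suc t) i s - z t i s) = (\<lambda>s. ?b s - zb t i s)"
    by (simp add: zb_def fun_eq_iff)
  have q1: "2 * bil (Smat c E N i) (slots E N i) (\<lambda>s. ?b s - zb t i s) ?b
     = qf (Smat c E N i) (slots E N i) ?b - qf (Smat c E N i) (slots E N i) (zb t i)
       + qf (Smat c E N i) (slots E N i) (\<lambda>s. ?b s - zb t i s)"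
    by (rule qf_diff_id[OF Smat_sym])
  have cne: "c \<noteq> 0" using c_pos by simp
  define X1 where "X1 = (\<Sum>h\<in>hrows E N i. Hv i (z (Suc t) i) h \<bullet> Hv i ?b h)"
  define X2 where "X2 = (\<Sum>h\<in>hrows E N i. Dw d r i h * (w t i h \<bullet> Hv i ?b h))"
  define HH where "HH = (\<Sum>h\<in>hrows E N i. (norm (Hv i ?b h))\<^sup>2)"
  define GH where "GH = (\<Sum>h\<in>hrows E N i. g t i h \<bullet> Hv i ?b h)"
  define LA where "LA = (\<Sum>a\<in>arows E N i. lam t i a \<bullet> Av i ?b a)"
  define AA where "AA = (\<Sum>a\<in>arows E N i. (norm (Av i ?b a))\<^sup>2)"
  define L1 where "L1 = (\<Sum>a\<in>arows E N i. (norm (lam (Suc t) i a))\<^sup>2)"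
  define L0 where "L0 = (\<Sum>a\<in>arows E N i. (norm (lam t i a))\<^sup>2)"
  define B where "B = bil (Smat c E N i) (slots E N i) (\<lambda>s. ?b s - zb t i s) ?b"
  define Q1 where "Q1 = qf (Smat c E N i) (slots E N i) ?b"
  define Q0 where "Q0 = qf (Smat c E N i) (slots E N i) (zb t i)"
  define QD where "QD = qf (Smat c E N i) (slots E N i) (\<lambda>s. ?b s - zb t i s)"
  have H1: "X1 - X2 = HH - GH" unfolding X1_def X2_def HH_def GH_def by (rule h1)
  have Q: "2 * B = Q1 - Q0 + QD" unfolding B_def Q1_def Q0_def QD_def by (rule q1)
  have L: "L1 = L0 + 2 * c * LA + c\<^sup>2 * AA" unfolding L1_def L0_def LA_def AA_def by (rule l2)
  have L': "(1/c) * (L1 - L0) = 2 * LA + c * AA"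
    unfolding L using cne by (simp add: field_simps power2_eq_square)
  have "2 * (X1 - X2 + LA + c * AA + c * B) = 2 * (X1 - X2) + 2 * LA + 2 * c * AA + c * (2 * B)"
    by (simp add: algebra_simps)
  also have "\<dots> = 2 * (HH - GH) + 2 * LA + 2 * c * AA + c * (Q1 - Q0 + QD)" unfolding H1 Q ..
  also have "\<dots> = 2 * HH - 2 * GH + (1/c) * (L1 - L0) + c * AA + c * (Q1 - Q0) + c * QD"
    unfolding L' by (simp add: algebra_simps)
  finally have fin: "2 * (X1 - X2 + LA + c * AA + c * B) = 2 * HH - 2 * GH + (1/c) * (L1 - L0) + c * AA + c * (Q1 - Q0) + c * QD" .
  show ?thesis
    unfolding a2 d1 using fin unfolding X1_def X2_def HH_def GH_def LA_def AA_def L1_def L0_def B_def Q1_def Q0_def QD_def .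
qed

lemma fejer:
  "V (Suc t) \<le> V t - (\<Sum>i\<in>nodes N. \<Sum>h\<in>hrows E N i. (norm (Hv i (zb (Suc t) i) h))\<^sup>2)
     - c * (\<Sum>i\<in>nodes N. \<Sum>a\<in>arows E N i. (norm (Av i (zb (Suc t) i) a))\<^sup>2)
     + (\<Sum>i\<in>nodes N. \<Sum>h\<in>hrows E N i. (norm (g t i h))\<^sup>2)"
proof -
  define HH where "HH i = (\<Sum>h\<in>hrows E N i. (norm (Hv i (zb (Suc t) i) h))\<^sup>2)" for i
  define GH where "GH i = (\<Sum>h\<in>hrows E N i. g t i h \<bullet> Hv i (zb (Suc t) i) h)" for i
  define GG where "GG i = (\<Sum>h\<in>hrows E N i. (norm (g t i h))\<^sup>2)" for i
  define L1 where "L1 i = (\<Sum>a\<in>arows E N i. (norm (lam (Suc t) i a))\<^sup>2)" for i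
  define L0 where "L0 i = (\<Sum>a\<in>arows E N i. (norm (lam t i a))\<^sup>2)" for i
  define AA where "AA i = (\<Sum>a\<in>arows E N i. (norm (Av i (zb (Suc t) i) a))\<^sup>2)" for i
  define Q1 where "Q1 i = qf (Smat c E N i) (slots E N i) (zb (Suc t) i)" for i
  define Q0 where "Q0 i = qf (Smat c E N i) (slots E N i) (zb t i)" for i
  define QD where "QD i = qf (Smat c E N i) (slots E N i) (\<lambda>s. zb (Suc t) i s - zb t i s)" for i
  have s1: "(\<Sum>i\<in>nodes N. (L1 i - L0 i) / c) = (sum L1 (nodes N) - sum L0 (nodes N)) / c"
    by (simp add: sum_divide_distrib[symmetric] sum_subtractf)
  have s2: "(\<Sum>i\<in>nodes N. c * (Q1 i - Q0 i)) = c * (sum Q1 (nodes N) - sum Q0 (nodes N))"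
    by (simp add: sum_distrib_left[symmetric] sum_subtractf)
  have "lin t (zb (Suc t)) = 0" by (rule foc[OF feas0_zb])
  then have "0 = 2 * lin t (zb (Suc t))" by simp
  also have "\<dots> = (\<Sum>i\<in>nodes N. 2 * ((\<Sum>h\<in>hrows E N i. Hv i (z (Suc t) i) h \<bullet> Hv i (zb (Suc t) i) h) 
     - (\<Sum>h\<in>hrows E N i. Dw d r i h * (w t i h \<bullet> Hv i (zb (Suc t) i) h))
     + (\<Sum>a\<in>arows E N i. lam t i a \<bullet> Av i (zb (Suc t) i) a)
     + c * (\<Sum>a\<in>arows E N i. Av i (z (Suc t) i) a \<bullet> Av i (zb (Suc t) i) a)
     + c * bil (Smat c E N i) (slots E N i) (\<lambda>s. z (Suc t) i s - z t i s) (zb (Suc t) i)))"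
    unfolding lin_def by (rule sum_distrib_left)
  also have "\<dots> = (\<Sum>i\<in>nodes N. 2 * HH i - 2 * GH i + (1/c) * (L1 i - L0 i) + c * AA i + c * (Q1 i - Q0 i) + c * QD i)"
    unfolding HH_def GH_def L1_def L0_def AA_def Q1_def Q0_def QD_def
    by (rule sum.cong[OF refl], rule node_fej, assumption)
  also have "\<dots> = 2 * sum HH (nodes N) - 2 * sum GH (nodes N) + (1/c) * (sum L1 (nodes N) - sum L0 (nodes N))
     + c * sum AA (nodes N) + c * (sum Q1 (nodes N) - sum Q0 (nodes N)) + c * sum QD (nodes N)"
    using s1 s2 by (simp add: sum.distrib sum_subtractf sum_distrib_left sum_divide_distrib)
  finally have eq: "0 = 2 * sum HH (nodes N) - 2 * sum GH (nodes N) + (1/c) * (sum L1 (nodes N) - sum L0 (nodes N))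
     + c * sum AA (nodes N) + c * (sum Q1 (nodes N) - sum Q0 (nodes N)) + c * sum QD (nodes N)" .
  have gh: "2 * sum GH (nodes N) \<le> sum GG (nodes N) + sum HH (nodes N)"
  proof -
    have "2 * sum GH (nodes N) = (\<Sum>i\<in>nodes N. \<Sum>h\<in>hrows E N i. 2 * (g t i h \<bullet> Hv i (zb (Suc t) i) h))"
      unfolding GH_def by (simp add: sum_distrib_left)
    also have "\<dots> \<le> (\<Sum>i\<in>nodes N. \<Sum>h\<in>hrows E N i. (norm (g t i h))\<^sup>2 + (norm (Hv i (zb (Suc t) i) h))\<^sup>2)"
      by (intro sum_mono two_inner_le)
    also have "\<dots> = sum GG (nodes N) + sum HH (nodes N)"
      unfolding GG_def HH_def by (simp add: sum.distrib)
    finally show ?thesis .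
  qed
  have qd: "0 \<le> sum QD (nodes N)" unfolding QD_def by (intro sum_nonneg qfS_nonneg c_pos)
  have V1: "V (Suc t) = c * sum Q1 (nodes N) + (1/c) * sum L1 (nodes N)" unfolding V_def Q1_def L1_def ..
  have V0: "V t = c * sum Q0 (nodes N) + (1/c) * sum L0 (nodes N)" unfolding V_def Q0_def L0_def ..
  have goal: "V (Suc t) \<le> V t - sum HH (nodes N) - c * sum AA (nodes N) + sum GG (nodes N)"
    unfolding V1 V0 using eq gh qd c_pos
    by (simp add: algebra_simps) (smt (verit) mult_nonneg_nonneg)
  then show ?thesis unfolding HH_def AA_def GG_def .
qed

end

lemma norm3: "norm (x - y + z) \<le> norm x + norm y + norm z" for x y z :: "'a::real_normed_vector"
proof -
  have "norm (x - y + z) \<le> norm (x - y) + norm z" by (rule norm_triangle_ineq)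
  moreover have "norm (x - y) \<le> norm x + norm y" by (rule norm_triangle_ineq4)
  ultimately show ?thesis by linarith
qed

lemma norm2m: "norm (x - y) \<le> norm x + norm y" for x y :: "'a::real_normed_vector"
  by (rule norm_triangle_ineq4)

context admm begin

definition a0 :: nat where "a0 = (SOME a. a \<in> anc)"
lemma a0_anc: "a0 \<in> anc" unfolding a0_def using anc_ne by (auto intro: someI_ex)
lemma a0_node: "a0 \<in> nodes N" using a0_anc anc_sub by auto

lemma Kp_ex: "\<exists>K\<ge>0. \<forall>j\<in>nodes N. \<forall>(f::nat \<Rightarrow> real^'n) m. 0 \<le> m \<longrightarrow>
   (\<forall>a b. E a b \<longrightarrow> norm (f b) \<le> norm (f a) + m) \<longrightarrow> norm (f j) \<le> norm (f a0) + K * m"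
proof -
  have "\<forall>j\<in>nodes N. \<exists>k::nat. \<forall>(f::nat \<Rightarrow> real^'n) m.
           (\<forall>a b. E a b \<longrightarrow> norm (f b) \<le> norm (f a) + m) \<longrightarrow> norm (f j) \<le> norm (f a0) + real k * m"
  proof
    fix j assume "j \<in> nodes N"
    then have "E\<^sup>*\<^sup>* a0 j" using connected a0_node by blast
    then show "\<exists>k::nat. \<forall>(f::nat \<Rightarrow> real^'n) m.
           (\<forall>a b. E a b \<longrightarrow> norm (f b) \<le> norm (f a) + m) \<longrightarrow> norm (f j) \<le> norm (f a0) + real k * m"
      by (rule path_bound)
  qed
  then obtain kf where kf: "\<forall>j\<in>nodes N. \<forall>(f::nat \<Rightarrow> real^'n) m.
           (\<forall>a b. E a b \<longrightarrow> norm (f b) \<le> norm (f a) + m) \<longrightarrow> norm (f j) \<le> norm (f a0) + real (kf j) * m"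
    by (metis (no_types, lifting) bchoice)
  define K where "K = (\<Sum>j\<in>nodes N. real (kf j))"
  show ?thesis
  proof (intro exI[of _ K] conjI ballI allI impI)
    show "0 \<le> K" unfolding K_def by (intro sum_nonneg) auto
    fix j and f :: "nat \<Rightarrow> real^'n" and m :: real
    assume j: "j \<in> nodes N" and m: "0 \<le> m" and h: "\<forall>a b. E a b \<longrightarrow> norm (f b) \<le> norm (f a) + m"
    have "real (kf j) \<le> K" unfolding K_def by (rule member_le_sum) (use j in auto)
    then have "real (kf j) * m \<le> K * m" using m by (rule mult_right_mono)
    then show "norm (f j) \<le> norm (f a0) + K * m" using kf j h by fastforce
  qed
qed

definition Kp :: real where
  "Kp = (SOME K. K \<ge> 0 \<and> (\<forall>j\<in>nodes N. \<forall>(f::nat \<Rightarrow> real^'n) m. 0 \<le> m \<longrightarrow>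
   (\<forall>a b. E a b \<longrightarrow> norm (f b) \<le> norm (f a) + m) \<longrightarrow> norm (f j) \<le> norm (f a0) + K * m))"

lemma Kp: "0 \<le> Kp" "\<forall>j\<in>nodes N. \<forall>(f::nat \<Rightarrow> real^'n) m. 0 \<le> m \<longrightarrow>
   (\<forall>a b. E a b \<longrightarrow> norm (f b) \<le> norm (f a) + m) \<longrightarrow> norm (f j) \<le> norm (f a0) + Kp * m"
  using someI_ex[OF Kp_ex] unfolding Kp_def[symmetric] by auto

lemma Kp_use:
  fixes f :: "nat \<Rightarrow> real^'n"
  assumes "j \<in> nodes N" "0 \<le> m" "\<And>a b. E a b \<Longrightarrow> norm (f b) \<le> norm (f a) + m"
  shows "norm (f j) \<le> norm (f a0) + Kp * m"
  using Kp(2) assms by blast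

lemma coerc:
  assumes v: "feas0 v" and m: "0 \<le> m"
    and hb: "\<And>i h. i \<in> nodes N \<Longrightarrow> h \<in> hrows E N i \<Longrightarrow> norm (Hv i (v i) h) \<le> m"
    and ab: "\<And>i a. i \<in> nodes N \<Longrightarrow> a \<in> arows E N i \<Longrightarrow> norm (Av i (v i) a) \<le> m"
    and i: "i \<in> nodes N" and s: "s \<in> slots E N i"
  shows "norm (v i s) \<le> (2 * Kp + 2) * m"
proof -
  have pair: "v a (SPp b) = v b (SPm a)" if "a \<in> nodes N" "b \<in> nbrs E N a" for a b
    using v that unfolding feas0_def by blast
  have x: "norm (v j SX) \<le> 2 * Kp * m" if j: "j \<in> nodes N" for j
  proof -
    have "norm (v j SX) \<le> norm (v a0 SX) + Kp * (2 * m)"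
    proof (rule Kp_use[of j "2*m" "\<lambda>j. v j SX"])
      fix a b assume ab': "E a b"
      have b: "b \<in> nbrs E N a" by (rule nbrsI[OF ab'])
      have a: "a \<in> nbrs E N b" by (rule nbrsI[OF E_sym[OF ab']])
      have an: "a \<in> nodes N" "b \<in> nodes N" using E_nodes[OF ab'] by auto
      have "v b SX = v a SX - Hv a (v a) (HV b) + Av b (v b) (AP a)"
        by (simp add: Hv_HV[OF b] Av_AP[OF a] pair[OF an(1) b])
      then have "norm (v b SX) \<le> norm (v a SX) + norm (Hv a (v a) (HV b)) + norm (Av b (v b) (AP a))"
        using norm3 by metis
      also have "\<dots> \<le> norm (v a SX) + m + m"
        using hb[OF an(1)] ab[OF an(2)] b a by (intro add_mono) auto
      finally show "norm (v b SX) \<le> norm (v a SX) + 2 * m" by simp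
    qed (use j m in auto)
    moreover have "v a0 SX = 0" using v a0_anc unfolding feas0_def by blast
    ultimately show ?thesis by simp
  qed
  have xi: "norm (v i SX) \<le> 2 * Kp * m" by (rule x[OF i])
  have y: "norm (v i SY) \<le> 2 * Kp * m + m"
  proof -
    have "v i SY = v i SX - Hv i (v i) HU" by (simp add: Hv_HU)
    then have "norm (v i SY) \<le> norm (v i SX) + norm (Hv i (v i) HU)" using norm2m by metis
    then show ?thesis using xi hb[OF i, of HU] by simp
  qed
  have Kpm: "0 \<le> Kp * m" using Kp(1) m by simp
  from s show ?thesis
  proof (cases rule: slots_cases)
    case 1 then show ?thesis using xi m by (simp add: algebra_simps)
  next
    case 2 then show ?thesis using y m by (simp add: algebra_simps)
  next
    case (3 j)
    have "v i (SPm j) = v i SX - Av i (v i) (AP j)" by (simp add: Av_AP[OF 3(1)])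
    then have "norm (v i (SPm j)) \<le> norm (v i SX) + norm (Av i (v i) (AP j))" using norm2m by metis
    then show ?thesis using 3 xi ab[OF i, of "AP j"] m by (simp add: algebra_simps)
  next
    case (4 j)
    have "v i (SPp j) = v i SX - Hv i (v i) (HV j)" by (simp add: Hv_HV[OF 4(1)])
    then have "norm (v i (SPp j)) \<le> norm (v i SX) + norm (Hv i (v i) (HV j))" using norm2m by metis
    then show ?thesis using 4 xi hb[OF i, of "HV j"] m by (simp add: algebra_simps)
  next
    case (5 j)
    have "v i (SQm j) = v i SY - Av i (v i) (AQm j)" by (simp add: Av_AQm[OF 5(1)])
    then have "norm (v i (SQm j)) \<le> norm (v i SY) + norm (Av i (v i) (AQm j))" using norm2m by metis
    then show ?thesis using 5 y ab[OF i, of "AQm j"] m by (simp add: algebra_simps)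
  next
    case (6 j)
    have "v i (SQp j) = v i SY - Av i (v i) (AQp j)" by (simp add: Av_AQp[OF 6(1)])
    then have "norm (v i (SQp j)) \<le> norm (v i SY) + norm (Av i (v i) (AQp j))" using norm2m by metis
    then show ?thesis using 6 y ab[OF i, of "AQp j"] m by (simp add: algebra_simps)
  qed
qed

definition zeta :: "nat \<Rightarrow> nat \<Rightarrow> slot \<Rightarrow> real^'n" where
  "zeta t i s = (\<Sum>k<t. c *\<^sub>R zb (Suc k) i s)"

lemma zeta_0: "zeta 0 = (\<lambda>i s. 0)" by (simp add: zeta_def fun_eq_iff)
lemma zeta_Suc: "zeta (Suc t) = (\<lambda>i s. zeta t i s + c *\<^sub>R zb (Suc t) i s)"
  by (simp add: zeta_def fun_eq_iff)

lemma feas0_zeta: "feas0 (zeta t)"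
proof (induction t)
  case 0 then show ?case unfolding zeta_0 by (rule feas0_zero)
next
  case (Suc t) then show ?case unfolding zeta_Suc by (rule feas0_add[OF _ feas0_zb])
qed

lemma mv_zero: "mv M C (\<lambda>s. 0) r = 0" by (simp add: mv_def)

lemma lam_zeta: "i \<in> nodes N \<Longrightarrow> a \<in> arows E N i \<Longrightarrow> lam t i a = Av i (zeta t i) a"
proof (induction t)
  case 0 then show ?case using lam0 by (simp add: zeta_0 mv_def)
next
  case (Suc t)
  have "zeta (Suc t) i = (\<lambda>s. zeta t i s + c *\<^sub>R zb (Suc t) i s)" by (simp add: zeta_Suc)
  then have "Av i (zeta (Suc t) i) a = Av i (zeta t i) a + c *\<^sub>R Av i (zb (Suc t) i) a"
    by (simp add: mv_add mv_scale)
  then show ?case using Suc lamupd[OF Suc.prems] Av_zb[OF Suc.prems(2)] by simp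
qed

definition vv :: "(nat \<Rightarrow> slot \<Rightarrow> real^'n) \<Rightarrow> nat \<Rightarrow> slot \<Rightarrow> real^'n" where
  "vv \<zeta> i s = (case s of SX \<Rightarrow> 0 | SPm j \<Rightarrow> \<zeta> i (SPm j) - \<zeta> i SX | SPp j \<Rightarrow> \<zeta> i (SPp j) - \<zeta> j SX
      | SY \<Rightarrow> \<zeta> i SY - \<zeta> a0 SY | SQm j \<Rightarrow> \<zeta> i (SQm j) - \<zeta> a0 SY | SQp j \<Rightarrow> \<zeta> i (SQp j) - \<zeta> a0 SY)"

lemma feas0_vv: assumes "feas0 \<zeta>" shows "feas0 (vv \<zeta>)"
  using assms unfolding feas0_def vv_def by simp

lemma Av_vv: assumes "a \<in> arows E N i" shows "Av i (vv \<zeta> i) a = Av i (\<zeta> i) a"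
  using assms by (cases rule: arows_cases) (auto simp: Av_AP Av_AQm Av_AQp vv_def)

lemma vv_bound:
  assumes ze: "feas0 \<zeta>" and L: "0 \<le> \<Lambda>"
    and ab: "\<And>i a. i \<in> nodes N \<Longrightarrow> a \<in> arows E N i \<Longrightarrow> norm (Av i (\<zeta> i) a) \<le> \<Lambda>"
    and i: "i \<in> nodes N" and s: "s \<in> slots E N i"
  shows "norm (vv \<zeta> i s) \<le> (2 * Kp + 1) * \<Lambda>"
proof -
  have pair: "\<zeta> a (SPp b) = \<zeta> b (SPm a)" "\<zeta> a (SQp b) = \<zeta> b (SQm a)" if "a \<in> nodes N" "b \<in> nbrs E N a" for a b
    using ze that unfolding feas0_def by blast+
  have y: "norm (\<zeta> j SY - \<zeta> a0 SY) \<le> 2 * Kp * \<Lambda>" if j: "j \<in> nodes N" for j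
  proof -
    have "norm (\<zeta> j SY - \<zeta> a0 SY) \<le> norm (\<zeta> a0 SY - \<zeta> a0 SY) + Kp * (2 * \<Lambda>)"
    proof (rule Kp_use[of j "2*\<Lambda>" "\<lambda>j. \<zeta> j SY - \<zeta> a0 SY"])
      fix a b assume ab': "E a b"
      have b: "b \<in> nbrs E N a" by (rule nbrsI[OF ab'])
      have a: "a \<in> nbrs E N b" by (rule nbrsI[OF E_sym[OF ab']])
      have an: "a \<in> nodes N" "b \<in> nodes N" using E_nodes[OF ab'] by auto
      have "\<zeta> b SY - \<zeta> a0 SY = (\<zeta> a SY - \<zeta> a0 SY) - Av a (\<zeta> a) (AQm b) + Av b (\<zeta> b) (AQp a)"
        by (simp add: Av_AQm[OF b] Av_AQp[OF a] pair(2)[OF an(2) a])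
      then have "norm (\<zeta> b SY - \<zeta> a0 SY) \<le> norm (\<zeta> a SY - \<zeta> a0 SY) + norm (Av a (\<zeta> a) (AQm b)) + norm (Av b (\<zeta> b) (AQp a))"
        using norm3 by metis
      also have "\<dots> \<le> norm (\<zeta> a SY - \<zeta> a0 SY) + \<Lambda> + \<Lambda>"
        using ab[OF an(1)] ab[OF an(2)] b a by (intro add_mono) auto
      finally show "norm (\<zeta> b SY - \<zeta> a0 SY) \<le> norm (\<zeta> a SY - \<zeta> a0 SY) + 2 * \<Lambda>" by simp
    qed (use j L in auto)
    then show ?thesis by simp
  qed
  have KL: "0 \<le> Kp * \<Lambda>" using Kp(1) L by simp
  from s show ?thesis
  proof (cases rule: slots_cases)
    case 1 then show ?thesis using KL L by (simp add: vv_def algebra_simps)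
  next
    case 2 then show ?thesis using y[OF i] L by (simp add: vv_def algebra_simps)
  next
    case (3 j)
    have "vv \<zeta> i s = - Av i (\<zeta> i) (AP j)" using 3 by (simp add: vv_def Av_AP[OF 3(1)])
    then show ?thesis using ab[OF i, of "AP j"] 3 KL by (simp add: algebra_simps)
  next
    case (4 j)
    have jn: "j \<in> nodes N" "i \<in> nbrs E N j" using nbrsD[OF 4(1)] by auto
    have "vv \<zeta> i s = - Av j (\<zeta> j) (AP i)" using 4 by (simp add: vv_def Av_AP[OF jn(2)] pair(1)[OF i 4(1)])
    then show ?thesis using ab[OF jn(1), of "AP i"] jn KL by (simp add: algebra_simps)
  next
    case (5 j)
    have "vv \<zeta> i s = (\<zeta> i SY - \<zeta> a0 SY) - Av i (\<zeta> i) (AQm j)" using 5 by (simp add: vv_def Av_AQm[OF 5(1)])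
    then have "norm (vv \<zeta> i s) \<le> norm (\<zeta> i SY - \<zeta> a0 SY) + norm (Av i (\<zeta> i) (AQm j))" using norm2m by metis
    then show ?thesis using y[OF i] ab[OF i, of "AQm j"] 5 by (simp add: algebra_simps)
  next
    case (6 j)
    have "vv \<zeta> i s = (\<zeta> i SY - \<zeta> a0 SY) - Av i (\<zeta> i) (AQp j)" using 6 by (simp add: vv_def Av_AQp[OF 6(1)])
    then have "norm (vv \<zeta> i s) \<le> norm (\<zeta> i SY - \<zeta> a0 SY) + norm (Av i (\<zeta> i) (AQp j))" using norm2m by metis
    then show ?thesis using y[OF i] ab[OF i, of "AQp j"] 6 by (simp add: algebra_simps)
  qed
qed

end

lemma dsum_le:
  fixes f :: "'i \<Rightarrow> 'h \<Rightarrow> real"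
  assumes "finite I" "\<And>i. finite (R i)" "i \<in> I" "h \<in> R i" "\<And>i h. 0 \<le> f i h"
  shows "f i h \<le> (\<Sum>i\<in>I. \<Sum>h\<in>R i. f i h)"
proof -
  have "f i h \<le> (\<Sum>h\<in>R i. f i h)" by (rule member_le_sum) (use assms in auto)
  also have "\<dots> \<le> (\<Sum>i\<in>I. \<Sum>h\<in>R i. f i h)"
    by (rule member_le_sum[where f = "\<lambda>i. \<Sum>h\<in>R i. f i h"]) (use assms in \<open>auto intro: sum_nonneg\<close>)
  finally show ?thesis .
qed

lemma norm3b: "norm (x + y - z) \<le> norm x + norm y + norm z" for x y z :: "'a::real_normed_vector"
proof -
  have "norm (x + y - z) \<le> norm (x + y) + norm z" by (rule norm_triangle_ineq4)
  moreover have "norm (x + y) \<le> norm x + norm y" by (rule norm_triangle_ineq)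
  ultimately show ?thesis by linarith
qed

lemma sq3: "(a + b + c)\<^sup>2 \<le> 3 * (a\<^sup>2 + b\<^sup>2 + c\<^sup>2)" for a b c :: real
proof -
  have "0 \<le> (a - b)\<^sup>2 + (b - c)\<^sup>2 + (a - c)\<^sup>2" by simp
  then show ?thesis by (simp add: power2_eq_square algebra_simps)
qed

context admm begin

definition "NH = (\<Sum>i\<in>nodes N. real (card (hrows E N i)))"
definition "NA = (\<Sum>i\<in>nodes N. real (card (arows E N i)))"
definition "NS = (\<Sum>i\<in>nodes N. real (card (slots E N i)))"
definition "NS2 = (\<Sum>i\<in>nodes N. real (card (slots E N i)) * real (card (slots E N i)))"
definition "Smax = (\<Sum>i\<in>nodes N. real (card (arows E N i)) + real (card (hrows E N i)) / c)"
definition "hc = (\<Sum>i\<in>nodes N. \<Sum>h\<in>hrows E N i. norm (Hv i (zh i) h))"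
definition "dm = (\<Sum>i\<in>nodes N. \<Sum>h\<in>hrows E N i. \<bar>Dw d r i h\<bar>)"
definition "Kc = 2 * Kp + 2"
definition "HS t = (\<Sum>i\<in>nodes N. \<Sum>h\<in>hrows E N i. (norm (Hv i (zb t i) h))\<^sup>2)"
definition "AS t = (\<Sum>i\<in>nodes N. \<Sum>a\<in>arows E N i. (norm (Av i (zb t i) a))\<^sup>2)"
definition "e t = sqrt (HS t + AS t)"
definition "Lsq t = (\<Sum>i\<in>nodes N. \<Sum>a\<in>arows E N i. (norm (lam t i a))\<^sup>2)"

lemma NH_ge: "i \<in> nodes N \<Longrightarrow> real (card (hrows E N i)) \<le> NH"
  unfolding NH_def by (rule member_le_sum) auto
lemma NA_ge: "i \<in> nodes N \<Longrightarrow> real (card (arows E N i)) \<le> NA"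
  unfolding NA_def by (rule member_le_sum) auto
lemma NS_ge: "i \<in> nodes N \<Longrightarrow> real (card (slots E N i)) \<le> NS"
  unfolding NS_def by (rule member_le_sum) auto
lemma Smax_ge: "i \<in> nodes N \<Longrightarrow> \<bar>Smat c E N i s s'\<bar> \<le> Smax"
proof -
  assume i: "i \<in> nodes N"
  have "real (card (arows E N i)) + real (card (hrows E N i)) / c \<le> Smax"
    unfolding Smax_def by (rule member_le_sum) (use i c_pos in auto)
  then show ?thesis using Smat_abs_le[OF c_pos, of E N i s s'] by linarith
qed
lemma Smax_nn: "0 \<le> Smax" unfolding Smax_def using c_pos by (intro sum_nonneg) auto
lemma hc_ge: "i \<in> nodes N \<Longrightarrow> h \<in> hrows E N i \<Longrightarrow> norm (Hv i (zh i) h) \<le> hc"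
  unfolding hc_def by (rule dsum_le) auto
lemma dm_ge: "i \<in> nodes N \<Longrightarrow> h \<in> hrows E N i \<Longrightarrow> \<bar>Dw d r i h\<bar> \<le> dm"
  unfolding dm_def by (rule dsum_le) auto
lemma nn: "0 \<le> NH" "0 \<le> NS2" "0 \<le> hc" "0 \<le> dm" "0 \<le> Kc" "0 \<le> NA" "0 \<le> NS"
  unfolding NH_def NS2_def hc_def dm_def Kc_def NA_def NS_def using Kp(1) by (auto intro!: sum_nonneg)
lemma HS_nn: "0 \<le> HS t" unfolding HS_def by (intro sum_nonneg) auto
lemma AS_nn: "0 \<le> AS t" unfolding AS_def by (intro sum_nonneg) auto
lemma e_nn: "0 \<le> e t" unfolding e_def using HS_nn AS_nn by simp
lemma e_sq: "(e t)\<^sup>2 = HS t + AS t" unfolding e_def using HS_nn AS_nn by simp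
lemma Lsq_nn: "0 \<le> Lsq t" unfolding Lsq_def by (intro sum_nonneg) auto

lemma NS2_ge: "i \<in> nodes N \<Longrightarrow> real (card (slots E N i)) * real (card (slots E N i)) \<le> NS2"
  unfolding NS2_def by (rule member_le_sum) auto

lemma w_le: assumes "1 \<le> t" "i \<in> nodes N" "h \<in> hrows E N i" shows "norm (w t i h) \<le> 1"
proof -
  obtain t' where t: "t = Suc t'" using assms(1) by (cases t) auto
  have "closest_point (cball (0::real^'n) 1) (w t' i h + (1/\<rho>) *\<^sub>R (Dw d r i h *\<^sub>R mv Hmat (slots E N i) (z (Suc t') i) h))
     \<in> cball 0 1"
    by (rule closest_point_in_set) auto
  then show ?thesis unfolding t wupd[OF assms(2,3)] by simp
qed

lemma H_le_e: "i \<in> nodes N \<Longrightarrow> h \<in> hrows E N i \<Longrightarrow> norm (Hv i (zb t i) h) \<le> e t"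
proof -
  assume a: "i \<in> nodes N" "h \<in> hrows E N i"
  have "sqrt ((norm (Hv i (zb t i) h))\<^sup>2) \<le> sqrt (HS t + AS t)"
    unfolding HS_def by (rule entry_le_sqrt) (use a AS_nn in auto)
  then show ?thesis unfolding e_def by simp
qed

lemma A_le_e: "i \<in> nodes N \<Longrightarrow> a \<in> arows E N i \<Longrightarrow> norm (Av i (zb t i) a) \<le> e t"
proof -
  assume a: "i \<in> nodes N" "a \<in> arows E N i"
  have "sqrt ((norm (Av i (zb t i) a))\<^sup>2) \<le> sqrt (AS t + HS t)"
    unfolding AS_def by (rule entry_le_sqrt) (use a HS_nn in auto)
  then show ?thesis unfolding e_def by (simp add: add.commute)
qed

lemma lam_le: "i \<in> nodes N \<Longrightarrow> a \<in> arows E N i \<Longrightarrow> norm (lam t i a) \<le> sqrt (Lsq t)"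
proof -
  assume a: "i \<in> nodes N" "a \<in> arows E N i"
  have "sqrt ((norm (lam t i a))\<^sup>2) \<le> sqrt (Lsq t + 0)"
    unfolding Lsq_def by (rule entry_le_sqrt) (use a in auto)
  then show ?thesis by simp
qed

lemma zb_le: assumes "1 \<le> t" "i \<in> nodes N" "s \<in> slots E N i" shows "norm (zb t i s) \<le> Kc * e t"
proof -
  obtain t' where t: "t = Suc t'" using assms(1) by (cases t) auto
  show ?thesis unfolding Kc_def t
    by (rule coerc[OF feas0_zb e_nn H_le_e A_le_e assms(2,3)])
qed

lemma lam_bound:
  assumes t1: "1 \<le> t"
  shows "sqrt (Lsq (Suc t)) \<le> (2*Kp+1) * (2*NH*(e (Suc t) + hc + dm) + c*NS2*Smax*(Kc*(e (Suc t) + e t)))"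
proof -
  define \<zeta> where "\<zeta> = zeta (Suc t)"
  define v where "v = vv \<zeta>"
  define Q where "Q = sqrt (Lsq (Suc t))"
  define vm where "vm = (2*Kp+1) * Q"
  have Qn: "0 \<le> Q" unfolding Q_def using Lsq_nn by simp
  have vmn: "0 \<le> vm" unfolding vm_def using Qn Kp(1) by simp
  have fv: "feas0 v" unfolding v_def \<zeta>_def by (rule feas0_vv[OF feas0_zeta])
  have Avv: "Av i (v i) a = lam (Suc t) i a" if "i \<in> nodes N" "a \<in> arows E N i" for i a
    unfolding v_def \<zeta>_def using Av_vv[OF that(2)] lam_zeta[OF that] by simp
  have vb: "norm (v i s) \<le> vm" if "i \<in> nodes N" "s \<in> slots E N i" for i s
    unfolding v_def vm_def
  proof (rule vv_bound[OF _ Qn _ that])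
    show "feas0 \<zeta>" unfolding \<zeta>_def by (rule feas0_zeta)
    fix i a assume "i \<in> nodes N" "a \<in> arows E N i"
    then show "norm (Av i (\<zeta> i) a) \<le> Q" unfolding Q_def \<zeta>_def using lam_le lam_zeta by metis
  qed
  have Hvb: "norm (Hv i (v i) h) \<le> 2 * vm" if i: "i \<in> nodes N" and h: "h \<in> hrows E N i" for i h
    using h
  proof (cases rule: hrows_cases)
    case 1
    have "norm (Hv i (v i) h) \<le> norm (v i SX) + norm (v i SY)" unfolding 1 Hv_HU by (rule norm2m)
    then show ?thesis using vb[OF i, of SX] vb[OF i, of SY] by simp
  next
    case (2 j)
    have "norm (Hv i (v i) h) \<le> norm (v i SX) + norm (v i (SPp j))" unfolding 2 Hv_HV[OF 2(1)] by (rule norm2m)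
    then show ?thesis using vb[OF i, of SX] vb[OF i, of "SPp j"] 2 by simp
  qed
  define B1 where "B1 = (e (Suc t) + hc + dm) * (2 * vm)"
  define T1 where "T1 i = (\<Sum>h\<in>hrows E N i. Hv i (z (Suc t) i) h \<bullet> Hv i (v i) h)
     - (\<Sum>h\<in>hrows E N i. Dw d r i h * (w t i h \<bullet> Hv i (v i) h))" for i
  define T3 where "T3 i = c * bil (Smat c E N i) (slots E N i) (\<lambda>s. z (Suc t) i s - z t i s) (v i)" for i
  have T1b: "\<bar>T1 i\<bar> \<le> real (card (hrows E N i)) * B1" if i: "i \<in> nodes N" for i
  proof -
    have eqT: "T1 i = (\<Sum>h\<in>hrows E N i. (Hv i (z (Suc t) i) h - Dw d r i h *\<^sub>R w t i h) \<bullet> Hv i (v i) h)"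
      unfolding T1_def by (simp add: sum_subtractf inner_diff_left)
    have "\<bar>T1 i\<bar> \<le> (\<Sum>h\<in>hrows E N i. \<bar>(Hv i (z (Suc t) i) h - Dw d r i h *\<^sub>R w t i h) \<bullet> Hv i (v i) h\<bar>)"
      unfolding eqT by (rule sum_abs)
    also have "\<dots> \<le> (\<Sum>h\<in>hrows E N i. B1)"
    proof (rule sum_mono)
      fix h assume h: "h \<in> hrows E N i"
      have hz: "Hv i (z (Suc t) i) h = Hv i (zb (Suc t) i) h + Hv i (zh i) h"
        by (subst z_split) (rule mv_add)
      have "norm (Hv i (z (Suc t) i) h - Dw d r i h *\<^sub>R w t i h)
          \<le> norm (Hv i (zb (Suc t) i) h) + norm (Hv i (zh i) h) + norm (Dw d r i h *\<^sub>R w t i h)"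
        unfolding hz by (rule norm3b)
      also have "\<dots> \<le> e (Suc t) + hc + dm"
      proof -
        have "norm (Dw d r i h *\<^sub>R w t i h) = \<bar>Dw d r i h\<bar> * norm (w t i h)" by simp
        also have "\<dots> \<le> dm * 1" by (rule mult_mono) (use dm_ge[OF i h] w_le[OF t1 i h] in auto)
        finally show ?thesis using H_le_e[OF i h, of "Suc t"] hc_ge[OF i h] by linarith
      qed
      finally have n1: "norm (Hv i (z (Suc t) i) h - Dw d r i h *\<^sub>R w t i h) \<le> e (Suc t) + hc + dm" .
      have "\<bar>(Hv i (z (Suc t) i) h - Dw d r i h *\<^sub>R w t i h) \<bullet> Hv i (v i) h\<bar>
         \<le> norm (Hv i (z (Suc t) i) h - Dw d r i h *\<^sub>R w t i h) * norm (Hv i (v i) h)"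
        by (rule Cauchy_Schwarz_ineq2)
      also have "\<dots> \<le> (e (Suc t) + hc + dm) * (2 * vm)"
        by (rule mult_mono[OF n1 Hvb[OF i h]]) (use e_nn nn in auto)
      finally show "\<bar>(Hv i (z (Suc t) i) h - Dw d r i h *\<^sub>R w t i h) \<bullet> Hv i (v i) h\<bar> \<le> B1"
        unfolding B1_def .
    qed
    also have "\<dots> = real (card (hrows E N i)) * B1" by simp
    finally show ?thesis .
  qed
  define B3 where "B3 i = c * (real (card (slots E N i)) * real (card (slots E N i)) * Smax * (Kc*(e (Suc t) + e t)) * vm)" for i
  have T3b: "\<bar>T3 i\<bar> \<le> B3 i" if i: "i \<in> nodes N" for i
  proof -
    have "\<bar>bil (Smat c E N i) (slots E N i) (\<lambda>s. z (Suc t) i s - z t i s) (v i)\<bar>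
        \<le> real (card (slots E N i)) * real (card (slots E N i)) * Smax * (Kc*(e (Suc t) + e t)) * vm"
    proof (rule bil_bound)
      fix s assume s: "s \<in> slots E N i"
      have "z (Suc t) i s - z t i s = zb (Suc t) i s - zb t i s" by (simp add: zb_def)
      then have "norm (z (Suc t) i s - z t i s) \<le> norm (zb (Suc t) i s) + norm (zb t i s)"
        using norm2m by metis
      also have "\<dots> \<le> Kc * e (Suc t) + Kc * e t"
        using zb_le[OF _ i s, of "Suc t"] zb_le[OF t1 i s] by simp
      finally show "norm (z (Suc t) i s - z t i s) \<le> Kc*(e (Suc t) + e t)" by (simp add: algebra_simps)
      show "norm (v i s) \<le> vm" by (rule vb[OF i s])
    next
      fix s s' show "\<bar>Smat c E N i s s'\<bar> \<le> Smax" by (rule Smax_ge[OF i])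
    qed
    then show ?thesis unfolding T3_def B3_def using c_pos by (simp add: abs_mult)
  qed
  have T2: "(\<Sum>a\<in>arows E N i. lam t i a \<bullet> Av i (v i) a) + c * (\<Sum>a\<in>arows E N i. Av i (z (Suc t) i) a \<bullet> Av i (v i) a)
      = (\<Sum>a\<in>arows E N i. (norm (lam (Suc t) i a))\<^sup>2)" if i: "i \<in> nodes N" for i
  proof -
    have "(\<Sum>a\<in>arows E N i. lam t i a \<bullet> Av i (v i) a) + c * (\<Sum>a\<in>arows E N i. Av i (z (Suc t) i) a \<bullet> Av i (v i) a)
       = (\<Sum>a\<in>arows E N i. (lam t i a + c *\<^sub>R Av i (z (Suc t) i) a) \<bullet> Av i (v i) a)"
      by (simp add: inner_add_left sum.distrib sum_distrib_left)
    also have "\<dots> = (\<Sum>a\<in>arows E N i. (norm (lam (Suc t) i a))\<^sup>2)"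
      by (rule sum.cong[OF refl]) (simp add: lamupd[OF i, symmetric] Avv[OF i] power2_norm_eq_inner)
    finally show ?thesis .
  qed
  have "0 = lin t v" using foc[OF fv] by simp
  also have "\<dots> = (\<Sum>i\<in>nodes N. T1 i + (\<Sum>a\<in>arows E N i. (norm (lam (Suc t) i a))\<^sup>2) + T3 i)"
    unfolding lin_def T1_def T3_def
    by (rule sum.cong[OF refl]) (simp add: T2[symmetric] algebra_simps)
  also have "\<dots> = (\<Sum>i\<in>nodes N. T1 i) + Lsq (Suc t) + (\<Sum>i\<in>nodes N. T3 i)"
    unfolding Lsq_def by (simp add: sum.distrib)
  finally have L0: "Lsq (Suc t) = - (\<Sum>i\<in>nodes N. T1 i) - (\<Sum>i\<in>nodes N. T3 i)" by linarith
  have s1: "\<bar>\<Sum>i\<in>nodes N. T1 i\<bar> \<le> NH * B1"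
  proof -
    have "\<bar>\<Sum>i\<in>nodes N. T1 i\<bar> \<le> (\<Sum>i\<in>nodes N. \<bar>T1 i\<bar>)" by (rule sum_abs)
    also have "\<dots> \<le> (\<Sum>i\<in>nodes N. real (card (hrows E N i)) * B1)" by (rule sum_mono) (rule T1b)
    also have "\<dots> = NH * B1" unfolding NH_def by (simp add: sum_distrib_right)
    finally show ?thesis .
  qed
  have s3: "\<bar>\<Sum>i\<in>nodes N. T3 i\<bar> \<le> c * (NS2 * Smax * (Kc*(e (Suc t) + e t)) * vm)"
  proof -
    have "\<bar>\<Sum>i\<in>nodes N. T3 i\<bar> \<le> (\<Sum>i\<in>nodes N. \<bar>T3 i\<bar>)" by (rule sum_abs)
    also have "\<dots> \<le> (\<Sum>i\<in>nodes N. B3 i)" by (rule sum_mono) (rule T3b)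
    also have "\<dots> = c * (NS2 * Smax * (Kc*(e (Suc t) + e t)) * vm)"
      unfolding B3_def NS2_def by (simp add: sum_distrib_right sum_distrib_left)
    finally show ?thesis .
  qed
  have Lle: "Lsq (Suc t) \<le> ((2*Kp+1) * (2*NH*(e (Suc t) + hc + dm) + c*NS2*Smax*(Kc*(e (Suc t) + e t)))) * sqrt (Lsq (Suc t))"
  proof -
    have "Lsq (Suc t) \<le> NH * B1 + c * (NS2 * Smax * (Kc*(e (Suc t) + e t)) * vm)" using L0 s1 s3 by linarith
    also have "\<dots> = ((2*Kp+1) * (2*NH*(e (Suc t) + hc + dm) + c*NS2*Smax*(Kc*(e (Suc t) + e t)))) * Q"
      unfolding B1_def vm_def by (simp add: algebra_simps)
    finally show ?thesis unfolding Q_def .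
  qed
  show ?thesis
    by (rule sqrt_trick[OF Lsq_nn _ Lle]) (use Kp(1) nn e_nn c_pos Smax_nn in \<open>auto intro!: mult_nonneg_nonneg add_nonneg_nonneg\<close>)
qed

end

lemma mapply_diag:
  assumes "finite C" "s \<in> C" "\<And>s'. s' \<in> C \<Longrightarrow> s' \<noteq> s \<Longrightarrow> K s s' = 0"
  shows "mapply K C f s = K s s *\<^sub>R f s"
proof -
  have "mapply K C f s = (\<Sum>s'\<in>C. if s' = s then K s s *\<^sub>R f s else 0)"
    unfolding mapply_def by (rule sum.cong) (use assms in auto)
  also have "\<dots> = K s s *\<^sub>R f s" using assms by (simp add: sum.delta')
  finally show ?thesis .
qed

lemma mtv_bound:
  assumes "finite R" "\<And>r s. \<bar>M r s\<bar> \<le> 1" "\<And>r. r \<in> R \<Longrightarrow> norm (f r) \<le> B"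
  shows "norm (mtv M R f s) \<le> real (card R) * B"
proof -
  have "norm (mtv M R f s) \<le> (\<Sum>r\<in>R. norm (M r s *\<^sub>R f r))" unfolding mtv_def by (rule norm_sum)
  also have "\<dots> \<le> (\<Sum>r\<in>R. B)"
  proof (rule sum_mono)
    fix r assume r: "r \<in> R"
    have "norm (M r s *\<^sub>R f r) = \<bar>M r s\<bar> * norm (f r)" by simp
    also have "\<dots> \<le> 1 * B" by (rule mult_mono) (use assms r in auto)
    finally show "norm (M r s *\<^sub>R f r) \<le> B" by simp
  qed
  finally show ?thesis by simp
qed

lemma mapply_bound:
  assumes "finite C" "\<And>s'. s' \<in> C \<Longrightarrow> \<bar>K s s'\<bar> \<le> \<kappa>" "\<And>s'. s' \<in> C \<Longrightarrow> norm (f s') \<le> B" "0 \<le> B"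
  shows "norm (mapply K C f s) \<le> real (card C) * (\<kappa> * B)"
proof -
  have "norm (mapply K C f s) \<le> (\<Sum>s'\<in>C. norm (K s s' *\<^sub>R f s'))" unfolding mapply_def by (rule norm_sum)
  also have "\<dots> \<le> (\<Sum>s'\<in>C. \<kappa> * B)"
  proof (rule sum_mono)
    fix s' assume r: "s' \<in> C"
    have k0: "0 \<le> \<kappa>" using assms(2)[OF r] by (meson abs_ge_zero order_trans)
    have "norm (K s s' *\<^sub>R f s') = \<bar>K s s'\<bar> * norm (f s')" by simp
    also have "\<dots> \<le> \<kappa> * B" by (rule mult_mono) (use assms r k0 in auto)
    finally show "norm (K s s' *\<^sub>R f s') \<le> \<kappa> * B" .
  qed
  finally show ?thesis by simp
qed

lemma gram_off:
  assumes "\<And>r. M r s * M r s' \<le> 0"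
  shows "gram M R s s' + absm (gram M R) s s' = 0"
proof -
  have "gram M R s s' \<le> 0" unfolding gram_def by (rule sum_nonpos) (use assms in auto)
  then show ?thesis unfolding absm_def by simp
qed

lemma gram_diag_nn: "0 \<le> gram M R s s" unfolding gram_def by (intro sum_nonneg) auto

lemma gram_diag_ge: assumes "finite R" "r0 \<in> R" "\<bar>M r0 s\<bar> = 1" shows "1 \<le> gram M R s s"
proof -
  have "M r0 s * M r0 s \<le> gram M R s s" unfolding gram_def
    by (rule member_le_sum[where f = "\<lambda>r. M r s * M r s"]) (use assms in auto)
  moreover have "M r0 s * M r0 s = 1" using assms(3) by (metis abs_mult_self_eq mult_1)
  ultimately show ?thesis by simp
qed

context admm begin

lemma Umat_off: assumes "s \<noteq> s'" shows "Umat c E N i s s' = 0"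
proof -
  have "Umat c E N i s s' = (gram Hmat (hrows E N i) s s' + absm (gram Hmat (hrows E N i)) s s')
      + c * (gram Amat (arows E N i) s s' + absm (gram Amat (arows E N i)) s s')"
    unfolding Umat_def Smat_def using c_pos by (simp add: algebra_simps)
  also have "\<dots> = 0" using gram_off[of Hmat s s'] gram_off[of Amat s s'] Hsign[OF assms] Asign[OF assms] by simp
  finally show ?thesis .
qed

lemma Umat_diag: assumes "s \<in> slots E N i" shows "2 * min 1 c \<le> Umat c E N i s s"
proof -
  have eq: "Umat c E N i s s = 2 * gram Hmat (hrows E N i) s s + 2 * c * gram Amat (arows E N i) s s"
    unfolding Umat_def Smat_def absm_def using c_pos gram_diag_nn[of Hmat "hrows E N i" s] gram_diag_nn[of Amat "arows E N i" s]
    by (simp add: algebra_simps)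
  have gh: "0 \<le> gram Hmat (hrows E N i) s s" "0 \<le> gram Amat (arows E N i) s s" by (rule gram_diag_nn)+
  have H1: "2 * min 1 c \<le> Umat c E N i s s" if "1 \<le> gram Hmat (hrows E N i) s s"
    unfolding eq using that gh c_pos by (smt (verit) mult_nonneg_nonneg)
  have A1: "2 * min 1 c \<le> Umat c E N i s s" if "1 \<le> gram Amat (arows E N i) s s"
  proof -
    have "c * 1 \<le> c * gram Amat (arows E N i) s s" using that c_pos by (intro mult_left_mono) auto
    then show ?thesis unfolding eq using gh c_pos by linarith
  qed
  from assms show ?thesis
  proof (cases rule: slots_cases)
    case 1 then show ?thesis by (intro H1 gram_diag_ge[of _ HU]) auto
  next
    case 2 then show ?thesis by (intro H1 gram_diag_ge[of _ HU]) auto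
  next
    case (3 j) then show ?thesis by (intro A1 gram_diag_ge[of _ "AP j"]) auto
  next
    case (4 j) then show ?thesis by (intro H1 gram_diag_ge[of _ "HV j"]) auto
  next
    case (5 j) then show ?thesis by (intro A1 gram_diag_ge[of _ "AQm j"]) auto
  next
    case (6 j) then show ?thesis by (intro A1 gram_diag_ge[of _ "AQp j"]) auto
  qed
qed

lemma g_le: assumes "1 \<le> t" "i \<in> nodes N" "h \<in> hrows E N i" shows "norm (g t i h) \<le> dm + hc"
proof -
  have "norm (g t i h) \<le> norm (Dw d r i h *\<^sub>R w t i h) + norm (Hv i (zh i) h)"
    unfolding g_def by (rule norm2m)
  moreover have "norm (Dw d r i h *\<^sub>R w t i h) \<le> dm"
  proof -
    have "norm (Dw d r i h *\<^sub>R w t i h) = \<bar>Dw d r i h\<bar> * norm (w t i h)" by simp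
    also have "\<dots> \<le> dm * 1" by (rule mult_mono) (use dm_ge[OF assms(2,3)] w_le[OF assms] in auto)
    finally show ?thesis by simp
  qed
  ultimately show ?thesis using hc_ge[OF assms(2,3)] by linarith
qed

definition "Bb = NH * (dm + hc)\<^sup>2"
definition "m0 = min 1 c"

lemma m0_pos: "0 < m0" unfolding m0_def using c_pos by simp
lemma Bb_nn: "0 \<le> Bb" unfolding Bb_def using nn by simp

lemma fej2: assumes "1 \<le> t" shows "V (Suc t) \<le> V t - m0 * (e (Suc t))\<^sup>2 + Bb"
proof -
  have GG: "(\<Sum>i\<in>nodes N. \<Sum>h\<in>hrows E N i. (norm (g t i h))\<^sup>2) \<le> Bb"
  proof -
    have "(\<Sum>i\<in>nodes N. \<Sum>h\<in>hrows E N i. (norm (g t i h))\<^sup>2) \<le> NH * (dm + hc)\<^sup>2"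
      unfolding NH_def
      by (rule sum2_le) (use g_le[OF assms] in \<open>auto intro!: power_mono\<close>)
    then show ?thesis unfolding Bb_def .
  qed
  have m: "m0 * (e (Suc t))\<^sup>2 \<le> HS (Suc t) + c * AS (Suc t)"
  proof -
    have "m0 * (e (Suc t))\<^sup>2 = m0 * HS (Suc t) + m0 * AS (Suc t)" unfolding e_sq by (simp add: algebra_simps)
    moreover have "m0 * HS (Suc t) \<le> 1 * HS (Suc t)" unfolding m0_def by (rule mult_right_mono) (use HS_nn in auto)
    moreover have "m0 * AS (Suc t) \<le> c * AS (Suc t)" unfolding m0_def by (rule mult_right_mono) (use AS_nn in auto)
    ultimately show ?thesis by linarith
  qed
  show ?thesis using fejer[of t] GG m unfolding HS_def AS_def by linarith
qed

lemma V_nn: "0 \<le> V t"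
  unfolding V_def using c_pos by (intro add_nonneg_nonneg mult_nonneg_nonneg sum_nonneg qfS_nonneg) auto

lemma Lsq_le_V: "Lsq t \<le> c * V t"
proof -
  have "0 \<le> c * (c * (\<Sum>i\<in>nodes N. qf (Smat c E N i) (slots E N i) (zb t i)))"
    using c_pos by (intro mult_nonneg_nonneg sum_nonneg qfS_nonneg) auto
  moreover have "c * V t = c * (c * (\<Sum>i\<in>nodes N. qf (Smat c E N i) (slots E N i) (zb t i))) + Lsq t"
    unfolding V_def Lsq_def using c_pos by (simp add: algebra_simps)
  ultimately show ?thesis by linarith
qed

lemma V_bound_e: "\<exists>P>0. \<forall>t\<ge>1. V (Suc t) \<le> P * ((e (Suc t))\<^sup>2 + (e t)\<^sup>2 + 1)"
proof -
  define b1 where "b1 = (2*Kp+1) * (2*NH + c*NS2*Smax*Kc)"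
  define b2 where "b2 = (2*Kp+1) * (c*NS2*Smax*Kc)"
  define b3 where "b3 = (2*Kp+1) * (2*NH*(hc + dm))"
  define P where "P = c * (NS2 * Smax * Kc\<^sup>2) + 3 * (b1\<^sup>2 + b2\<^sup>2 + b3\<^sup>2) / c + 1"
  have Kn: "0 \<le> 2*Kp+1" using Kp(1) by simp
  have bn: "0 \<le> b1" "0 \<le> b2" "0 \<le> b3" unfolding b1_def b2_def b3_def
    using Kn nn c_pos Smax_nn by (auto intro!: mult_nonneg_nonneg add_nonneg_nonneg)
  have Pn: "0 < P" unfolding P_def using c_pos nn Smax_nn
    by (intro add_nonneg_pos add_nonneg_nonneg mult_nonneg_nonneg divide_nonneg_pos) auto
  show ?thesis
  proof (intro exI[of _ P] conjI allI impI Pn)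
    fix t :: nat assume t1: "1 \<le> t"
    let ?e1 = "e (Suc t)" and ?e0 = "e t"
    have Q: "(\<Sum>i\<in>nodes N. qf (Smat c E N i) (slots E N i) (zb (Suc t) i)) \<le> NS2 * Smax * Kc\<^sup>2 * ?e1\<^sup>2"
    proof -
      have "(\<Sum>i\<in>nodes N. qf (Smat c E N i) (slots E N i) (zb (Suc t) i))
         \<le> (\<Sum>i\<in>nodes N. real (card (slots E N i)) * real (card (slots E N i)) * (Smax * Kc\<^sup>2 * ?e1\<^sup>2))"
      proof (rule sum_mono)
        fix i assume i: "i \<in> nodes N"
        have "qf (Smat c E N i) (slots E N i) (zb (Suc t) i) \<le> \<bar>bil (Smat c E N i) (slots E N i) (zb (Suc t) i) (zb (Suc t) i)\<bar>"
          unfolding qf_bil by simp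
        also have "\<dots> \<le> real (card (slots E N i)) * real (card (slots E N i)) * Smax * (Kc * ?e1) * (Kc * ?e1)"
          by (rule bil_bound) (use zb_le[of "Suc t" i] Smax_ge[OF i] i in auto)
        finally show "qf (Smat c E N i) (slots E N i) (zb (Suc t) i)
          \<le> real (card (slots E N i)) * real (card (slots E N i)) * (Smax * Kc\<^sup>2 * ?e1\<^sup>2)"
          by (simp add: power2_eq_square algebra_simps)
      qed
      also have "\<dots> = NS2 * (Smax * Kc\<^sup>2 * ?e1\<^sup>2)" unfolding NS2_def sum_distrib_right ..
      also have "\<dots> = NS2 * Smax * Kc\<^sup>2 * ?e1\<^sup>2" by (simp add: mult.assoc)
      finally show ?thesis .
    qed
    have X: "sqrt (Lsq (Suc t)) \<le> b1 * ?e1 + b2 * ?e0 + b3"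
      using lam_bound[OF t1] unfolding b1_def b2_def b3_def by (simp add: algebra_simps)
    have L: "Lsq (Suc t) \<le> 3 * (b1\<^sup>2 + b2\<^sup>2 + b3\<^sup>2) * (?e1\<^sup>2 + ?e0\<^sup>2 + 1)"
    proof -
      have "Lsq (Suc t) = (sqrt (Lsq (Suc t)))\<^sup>2" using Lsq_nn[of "Suc t"] by simp
      also have "\<dots> \<le> (b1 * ?e1 + b2 * ?e0 + b3)\<^sup>2" by (rule power_mono[OF X]) (use Lsq_nn[of "Suc t"] in simp)
      also have "\<dots> \<le> 3 * ((b1 * ?e1)\<^sup>2 + (b2 * ?e0)\<^sup>2 + b3\<^sup>2)" by (rule sq3)
      also have "\<dots> \<le> 3 * (b1\<^sup>2 + b2\<^sup>2 + b3\<^sup>2) * (?e1\<^sup>2 + ?e0\<^sup>2 + 1)"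
        using bn by (simp add: power_mult_distrib algebra_simps add_nonneg_nonneg mult_nonneg_nonneg)
      finally show ?thesis .
    qed
    have "V (Suc t) \<le> c * (NS2 * Smax * Kc\<^sup>2 * ?e1\<^sup>2) + (1/c) * (3 * (b1\<^sup>2 + b2\<^sup>2 + b3\<^sup>2) * (?e1\<^sup>2 + ?e0\<^sup>2 + 1))"
      unfolding V_def Lsq_def[symmetric] using Q L c_pos
      by (intro add_mono mult_left_mono) auto
    also have "\<dots> \<le> P * (?e1\<^sup>2 + ?e0\<^sup>2 + 1)"
    proof -
      define X where "X = NS2 * Smax * Kc\<^sup>2"
      define EE where "EE = ?e1\<^sup>2 + ?e0\<^sup>2 + 1"
      define B where "B = b1\<^sup>2 + b2\<^sup>2 + b3\<^sup>2"
      have Xn: "0 \<le> c * X" unfolding X_def using c_pos nn Smax_nn by simp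
      have En: "0 \<le> EE" unfolding EE_def by (simp add: add_nonneg_nonneg)
      have e1E: "?e1\<^sup>2 \<le> EE" unfolding EE_def by simp
      have a: "c * (X * ?e1\<^sup>2) \<le> (c * X) * EE"
        using mult_left_mono[OF e1E Xn] by (simp add: mult.assoc)
      have b: "(1/c) * (3 * B * EE) = (3 * B / c) * EE" by simp
      have p: "P * EE = (c * X) * EE + (3 * B / c) * EE + EE" unfolding P_def X_def B_def by (simp add: algebra_simps)
      show ?thesis using a b p En unfolding X_def[symmetric] EE_def[symmetric] B_def[symmetric] by linarith
    qed
    finally show "V (Suc t) \<le> P * (?e1\<^sup>2 + ?e0\<^sup>2 + 1)" .
  qed
qed

end

context admm begin

lemma V_bounded: "\<exists>M. \<forall>t\<ge>1. V t \<le> M"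
proof -
  obtain P where P: "P > 0" "\<forall>t\<ge>1. V (Suc t) \<le> P * ((e (Suc t))\<^sup>2 + (e t)\<^sup>2 + 1)"
    using V_bound_e by blast
  define K0 where "K0 = m0 + 2 * Bb"
  define M where "M = max (V 1) (max (V 2) (K0 * P / m0))"
  have step: "V (Suc (Suc t)) * (1 + m0 / P) \<le> V t + K0" if t1: "1 \<le> t" for t
  proof -
    have f1: "V (Suc t) \<le> V t - m0 * (e (Suc t))\<^sup>2 + Bb" by (rule fej2[OF t1])
    have f2: "V (Suc (Suc t)) \<le> V (Suc t) - m0 * (e (Suc (Suc t)))\<^sup>2 + Bb" by (rule fej2) (use t1 in simp)
    have pb: "V (Suc (Suc t)) \<le> P * ((e (Suc (Suc t)))\<^sup>2 + (e (Suc t))\<^sup>2 + 1)"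
      using P(2) t1 by simp
    have d: "V (Suc (Suc t)) / P \<le> (e (Suc (Suc t)))\<^sup>2 + (e (Suc t))\<^sup>2 + 1"
      using pb P(1) by (simp add: pos_divide_le_eq mult.commute)
    have "m0 * (V (Suc (Suc t)) / P) \<le> m0 * ((e (Suc (Suc t)))\<^sup>2 + (e (Suc t))\<^sup>2 + 1)"
      by (rule mult_left_mono[OF d]) (use m0_pos in simp)
    then have d2: "m0 * (V (Suc (Suc t)) / P) \<le> m0 * (e (Suc (Suc t)))\<^sup>2 + m0 * (e (Suc t))\<^sup>2 + m0"
      by (simp add: algebra_simps)
    have "V (Suc (Suc t)) * (1 + m0 / P) = V (Suc (Suc t)) + m0 * (V (Suc (Suc t)) / P)"
      by (simp add: algebra_simps)
    then show ?thesis using f1 f2 d2 unfolding K0_def by linarith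
  qed
  have inv: "V (Suc t) \<le> M \<and> V (Suc (Suc t)) \<le> M" for t
  proof (induction t)
    case 0 show ?case unfolding M_def by (simp add: numeral_2_eq_2)
  next
    case (Suc t)
    have pos: "0 < 1 + m0 / P" using m0_pos P(1) by (simp add: add_pos_nonneg)
    have "V (Suc (Suc (Suc t))) * (1 + m0 / P) \<le> V (Suc t) + K0" by (rule step) simp
    also have "\<dots> \<le> M + K0" using Suc by simp
    also have "\<dots> \<le> M * (1 + m0 / P)"
    proof -
      have "K0 * P / m0 \<le> M" unfolding M_def by simp
      then have "K0 * P / m0 * (m0 / P) \<le> M * (m0 / P)"
        by (rule mult_right_mono) (use m0_pos P(1) in simp)
      moreover have "K0 * P / m0 * (m0 / P) = K0" using m0_pos P(1) by (simp add: field_simps)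
      ultimately show ?thesis by (simp add: algebra_simps)
    qed
    finally have "V (Suc (Suc (Suc t))) * (1 + m0 / P) \<le> M * (1 + m0 / P)" .
    then have "V (Suc (Suc (Suc t))) \<le> M" using pos by (rule mult_right_le_imp_le)
    then show ?case using Suc by simp
  qed
  show ?thesis
  proof (intro exI[of _ M] allI impI)
    fix t :: nat assume "1 \<le> t"
    then obtain t' where "t = Suc t'" by (cases t) auto
    then show "V t \<le> M" using inv[of t'] by simp
  qed
qed

lemma zh_le: assumes "i \<in> nodes N" "s \<in> slots E N i"
  shows "norm (zh i s) \<le> (\<Sum>k\<in>nodes N. norm (ax k))"
proof -
  have axb: "norm (ax k) \<le> (\<Sum>k\<in>nodes N. norm (ax k))" if "k \<in> nodes N" for k
    by (rule member_le_sum) (use that in auto)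
  have nn0: "0 \<le> (\<Sum>k\<in>nodes N. norm (ax k))" by (intro sum_nonneg) auto
  from assms(2) show ?thesis
  proof (cases rule: slots_cases)
    case (4 j) then show ?thesis using axb[of j] nbrsD(3)[OF 4(1)] by (simp add: zh_def)
  qed (use axb[OF assms(1)] nn0 in \<open>auto simp: zh_def\<close>)
qed

lemma main:
  "bounded_seq N (slots E N) z \<and> bounded_seq N (hrows E N) w
       \<and> bounded_seq N (arows E N) lam \<and> bounded_seq N (slots E N) ztil"
proof -
  obtain M where M: "\<forall>t\<ge>1. V t \<le> M" using V_bounded by blast
  have M0: "0 \<le> M" using M V_nn[of 1] by force
  define Lb where "Lb = sqrt (c * M)"
  have Lb0: "0 \<le> Lb" unfolding Lb_def using M0 c_pos by simp
  have lamb: "norm (lam t i a) \<le> Lb" if "1 \<le> t" "i \<in> nodes N" "a \<in> arows E N i" for t i a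
  proof -
    have "norm (lam t i a) \<le> sqrt (Lsq t)" by (rule lam_le[OF that(2,3)])
    also have "\<dots> \<le> sqrt (c * M)"
    proof (rule real_sqrt_le_mono)
      have "c * V t \<le> c * M" using M that(1) c_pos by (intro mult_left_mono) auto
      then show "Lsq t \<le> c * M" using Lsq_le_V[of t] by linarith
    qed
    finally show ?thesis unfolding Lb_def .
  qed
  define Eb where "Eb = max (e 1) (sqrt ((M + Bb) / m0))"
  have eb: "e t \<le> Eb" if t1: "1 \<le> t" for t
  proof (cases "t = 1")
    case True then show ?thesis unfolding Eb_def by simp
  next
    case False
    then obtain t' where t': "t = Suc t'" "1 \<le> t'" using t1 False by (cases t) auto
    have "V (Suc t') \<le> V t' - m0 * (e (Suc t'))\<^sup>2 + Bb" by (rule fej2[OF t'(2)])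
    then have "m0 * (e (Suc t'))\<^sup>2 \<le> M + Bb" using M t'(2) V_nn[of "Suc t'"] by force
    then have "(e (Suc t'))\<^sup>2 \<le> (M + Bb) / m0" using m0_pos by (simp add: pos_le_divide_eq mult.commute)
    then have "e (Suc t') \<le> sqrt ((M + Bb) / m0)" by (rule real_le_rsqrt)
    then show ?thesis unfolding Eb_def t'(1) by simp
  qed
  define AX where "AX = (\<Sum>k\<in>nodes N. norm (ax k))"
  define Zb where "Zb = Kc * Eb + AX"
  have zbd: "norm (z t i s) \<le> Zb" if "1 \<le> t" "i \<in> nodes N" "s \<in> slots E N i" for t i s
  proof -
    have "z t i s = zb t i s + zh i s" by (simp add: zb_def)
    then have "norm (z t i s) \<le> norm (zb t i s) + norm (zh i s)" by (metis norm_triangle_ineq)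
    also have "\<dots> \<le> Kc * e t + AX" using zb_le[OF that] zh_le[OF that(2,3)] unfolding AX_def by (rule add_mono)
    also have "\<dots> \<le> Zb" unfolding Zb_def using eb[OF that(1)] nn(5) by (simp add: mult_left_mono)
    finally show ?thesis .
  qed
  have Zb0: "0 \<le> Zb" unfolding Zb_def AX_def Eb_def using nn(5) e_nn[of 1]
    by (intro add_nonneg_nonneg mult_nonneg_nonneg sum_nonneg) auto
  define ZT where "ZT = (NH * dm + NA * Lb + c * (NS * (Smax * Zb))) / (2 * m0)"
  have ztb: "norm (ztil (Suc t) i s) \<le> ZT" if t1: "1 \<le> t" and i: "i \<in> nodes N" and s: "s \<in> slots E N i" for t i s
  proof -
    have lhs: "mapply (Umat c E N i) (slots E N i) (ztil (Suc t) i) s = Umat c E N i s s *\<^sub>R ztil (Suc t) i s"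
      by (rule mapply_diag) (use s Umat_off in auto)
    have r1: "norm (mtv Hmat (hrows E N i) (\<lambda>h. Dw d r i h *\<^sub>R w t i h) s) \<le> NH * dm"
    proof -
      have "norm (mtv Hmat (hrows E N i) (\<lambda>h. Dw d r i h *\<^sub>R w t i h) s) \<le> real (card (hrows E N i)) * dm"
      proof (rule mtv_bound)
        fix h assume h: "h \<in> hrows E N i"
        have "norm (Dw d r i h *\<^sub>R w t i h) = \<bar>Dw d r i h\<bar> * norm (w t i h)" by simp
        also have "\<dots> \<le> dm * 1" by (rule mult_mono) (use dm_ge[OF i h] w_le[OF t1 i h] in auto)
        finally show "norm (Dw d r i h *\<^sub>R w t i h) \<le> dm" by simp
      qed (auto intro: Habs)
      also have "\<dots> \<le> NH * dm" by (rule mult_right_mono[OF NH_ge[OF i]]) (use nn in auto)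
      finally show ?thesis .
    qed
    have r2: "norm (mtv Amat (arows E N i) (lam t i) s) \<le> NA * Lb"
    proof -
      have "norm (mtv Amat (arows E N i) (lam t i) s) \<le> real (card (arows E N i)) * Lb"
        by (rule mtv_bound) (auto intro: Aabs lamb[OF t1 i])
      also have "\<dots> \<le> NA * Lb" by (rule mult_right_mono[OF NA_ge[OF i] Lb0])
      finally show ?thesis .
    qed
    have r3: "norm (c *\<^sub>R mapply (Smat c E N i) (slots E N i) (z t i) s) \<le> c * (NS * (Smax * Zb))"
    proof -
      have "norm (mapply (Smat c E N i) (slots E N i) (z t i) s) \<le> real (card (slots E N i)) * (Smax * Zb)"
        by (rule mapply_bound) (use Smax_ge[OF i] zbd[OF t1 i] Zb0 in auto)
      also have "\<dots> \<le> NS * (Smax * Zb)" by (rule mult_right_mono[OF NS_ge[OF i]]) (use Smax_nn Zb0 in simp)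
      finally show ?thesis using c_pos by (simp add: mult_left_mono)
    qed
    have "Umat c E N i s s * norm (ztil (Suc t) i s) = norm (Umat c E N i s s *\<^sub>R ztil (Suc t) i s)"
      using Umat_diag[OF s] m0_pos unfolding m0_def by simp
    also have "\<dots> = norm (mtv Hmat (hrows E N i) (\<lambda>h. Dw d r i h *\<^sub>R w t i h) s
            - mtv Amat (arows E N i) (lam t i) s
            + c *\<^sub>R mapply (Smat c E N i) (slots E N i) (z t i) s)"
      using ztileq[OF i s, of t] lhs by simp
    also have "\<dots> \<le> NH * dm + NA * Lb + c * (NS * (Smax * Zb))"
      using norm3 r1 r2 r3 by (smt (verit))
    finally have U1: "Umat c E N i s s * norm (ztil (Suc t) i s) \<le> NH * dm + NA * Lb + c * (NS * (Smax * Zb))" .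
    have "2 * m0 * norm (ztil (Suc t) i s) \<le> Umat c E N i s s * norm (ztil (Suc t) i s)"
      using Umat_diag[OF s] unfolding m0_def by (intro mult_right_mono) auto
    then have "2 * m0 * norm (ztil (Suc t) i s) \<le> NH * dm + NA * Lb + c * (NS * (Smax * Zb))" using U1 by linarith
    then show ?thesis unfolding ZT_def using m0_pos by (simp add: pos_le_divide_eq mult.commute)
  qed
  define ZT1 where "ZT1 = (\<Sum>i\<in>nodes N. \<Sum>s\<in>slots E N i. norm (ztil 1 i s))"
  have zt1: "norm (ztil 1 i s) \<le> ZT1" if "i \<in> nodes N" "s \<in> slots E N i" for i s
    unfolding ZT1_def by (rule dsum_le) (use that in auto)
  have B1: "bounded_seq N (slots E N) z"
    unfolding bounded_seq_def using zbd by blast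
  have B2: "bounded_seq N (hrows E N) w"
    unfolding bounded_seq_def using w_le by blast
  have B3: "bounded_seq N (arows E N) lam"
    unfolding bounded_seq_def using lamb by blast
  have B4: "bounded_seq N (slots E N) ztil"
    unfolding bounded_seq_def
  proof (intro exI[of _ "max ZT ZT1"] allI impI ballI)
    fix t :: nat and i s assume t: "1 \<le> t" and i: "i \<in> nodes N" and s: "s \<in> slots E N i"
    show "norm (ztil t i s) \<le> max ZT ZT1"
    proof (cases "t = 1")
      case True then show ?thesis using zt1[OF i s] by simp
    next
      case False
      then obtain t' where t': "t = Suc t'" "1 \<le> t'" using t by (cases t) auto
      then show ?thesis using ztb[OF t'(2) i s] by simp
    qed
  qed
  show ?thesis using B1 B2 B3 B4 by blast
qed

end

theorem lemmaA8p2: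
  fixes E :: "nat \<Rightarrow> nat \<Rightarrow> bool" and N :: nat and anc :: "nat set"
    and apos :: "nat \<Rightarrow> real^'n" and d :: "nat \<Rightarrow> nat \<Rightarrow> real" and r :: "nat \<Rightarrow> real"
    and c \<rho> :: real
    and z :: "nat \<Rightarrow> nat \<Rightarrow> slot \<Rightarrow> real^'n" and w :: "nat \<Rightarrow> nat \<Rightarrow> hrow \<Rightarrow> real^'n"
    and lam :: "nat \<Rightarrow> nat \<Rightarrow> arow \<Rightarrow> real^'n" and ztil :: "nat \<Rightarrow> nat \<Rightarrow> slot \<Rightarrow> real^'n"
  assumes E_nodes: "\<And>i j. E i j \<Longrightarrow> i \<in> nodes N \<and> j \<in> nodes N"
    and E_sym: "\<And>i j. E i j \<Longrightarrow> E j i"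
    and E_irrefl: "\<And>i. \<not> E i i"
    and deg_pos: "\<And>i. i \<in> nodes N \<Longrightarrow> deg E N i \<ge> 1"
    and connected: "\<And>i j. i \<in> nodes N \<Longrightarrow> j \<in> nodes N \<Longrightarrow> E\<^sup>*\<^sup>* i j"
    and anc_sub: "anc \<subseteq> nodes N" and anc_ne: "anc \<noteq> {}"
    and d_sym: "\<And>i j. E i j \<Longrightarrow> d i j = d j i"
    and d_nonneg: "\<And>i j. E i j \<Longrightarrow> d i j \<ge> 0"
    and r_nonneg: "\<And>i. i \<in> nodes N \<Longrightarrow> r i \<ge> 0"
    and c_pos: "c > 0" and rho_pos: "\<rho> > 0"
    and cond: "param_cond c \<rho> CARD('n) E N d r"
    and alg: "sp_admm_jcnl c \<rho> E N anc apos d r z w lam ztil"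
  shows "bounded_seq N (slots E N) z \<and> bounded_seq N (hrows E N) w
       \<and> bounded_seq N (arows E N) lam \<and> bounded_seq N (slots E N) ztil"
proof -
  interpret A: admm E N anc apos d r c \<rho> z w lam ztil
  proof
    show "\<And>i j. E i j \<Longrightarrow> i \<in> nodes N \<and> j \<in> nodes N" by (rule E_nodes)
    show "\<And>i j. E i j \<Longrightarrow> E j i" by (rule E_sym)
    show "\<And>i j. i \<in> nodes N \<Longrightarrow> j \<in> nodes N \<Longrightarrow> E\<^sup>*\<^sup>* i j" by (rule connected)
    show "anc \<subseteq> nodes N" by (rule anc_sub)
    show "anc \<noteq> {}" by (rule anc_ne)
    show "c > 0" by (rule c_pos)
    show "sp_admm_jcnl c \<rho> E N anc apos d r z w lam ztil" by (rule alg)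
  qed
  show ?thesis by (rule A.main)
qed

end
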